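(* Let $\mathfrak g$ be a finite-dimensional Lie algebra over a field $\mathbb K$ of characteristic zero and $V$ a non-negative bounded dg $\mathfrak g$-module. The assignment $\alpha=\{\alpha_k\}\mapsto c(\alpha)=\sum_k c_k(\alpha)$ gives a one-to-one correspondence between dg Loday–Pirashvili module structures $(V,\alpha)$ over $\mathfrak g$ and degree $0$ cocycles of the Chevalley–Eilenberg total complex $\Omega_{\mathfrak g}(\operatorname{Hom}(V,\mathfrak g))$. Moreover, there is a one-to-one correspondence between dg Loday–Pirashvili classes $(V,[\alpha])$ over $\mathfrak g$ and degree $0$ cohomology classes of the total complex $\Omega_{\mathfrak g}(\operatorname{Hom}(V,\mathfrak g))$.
   Context: A dg $\mathfrak g$-module is a bounded cochain complex $(V^\bullet,d^V)$ of $\mathfrak g$-modules with equivariant differentials; non-negative means $V^i=0$ for $i<0$. For a dg $\mathfrak g$-module $W$, $\Omega_{\mathfrak g}(W)=\wedge^\bullet\mathfrak g^\vee\otimes W$ (degree of $\wedge^p\mathfrak g^\vee\otimes W^q$ is $p+q$) with total differential $d^W_{\mathrm{tot}}=d^W_{\mathrm{CE}}+d^W$, $d^W_{\mathrm{CE}}$ the Chevalley–Eilenberg differential and $d^W(\omega\otimes w)=(-1)^p\omega\otimes d^Ww$. A dg Loday–Pirashvili module is a pair $(V,\alpha)$ where $\alpha\colon\Omega_{\mathfrak g}(V)\to\Omega_{\mathfrak g}(\mathfrak g)$ is a degree $0$ $\Omega_{\mathfrak g}$-linear map with $\alpha\circ d^V_{\mathrm{tot}}=d^{\mathfrak g}_{\mathrm{CE}}\circ\alpha$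 ($\mathfrak g$ in degree $0$ with adjoint action); it is generated by maps $\alpha_k\colon V^k\to\wedge^k\mathfrak g^\vee\otimes\mathfrak g$. Two such $\alpha,\alpha'$ are homotopic if $\alpha'-\alpha=d^{\mathfrak g}_{\mathrm{CE}}\circ h+h\circ d^V_{\mathrm{tot}}$ for some degree $-1$ $\Omega_{\mathfrak g}$-linear $h\colon\Omega_{\mathfrak g}(V)\to\Omega_{\mathfrak g}(\mathfrak g)$; the dg Loday–Pirashvili class $(V,[\alpha])$ is $V$ with the homotopy class of $\alpha$. $\operatorname{Hom}(V,\mathfrak g)$ is the dg $\mathfrak g$-module with $\operatorname{Hom}(V^k,\mathfrak g)$ in degree $-k$, differential given by precomposition with $d^V$ (with the standard Koszul sign) and action $(x\cdot\phi)(v)=[x,\phi(v)]-\phi(x\triangleright v)$. The cochain $c_k(\alpha)\in\wedge^k\mathfrak g^\vee\otimes\operatorname{Hom}(V^k,\mathfrak g)$ is the element equivalent to $\alpha_k$, so $c(\alpha)$ has degree $0$. *)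

theory Defs
  imports Complex_Main "HOL-Library.Function_Algebras"
begin

definition isgn :: "int \<Rightarrow> 'a::ab_group_add \<Rightarrow> 'a" where
  "isgn n a = (if even n then a else - a)"

definition del :: "nat \<Rightarrow> 'a list \<Rightarrow> 'a list" where
  "del i xs = take i xs @ drop (Suc i) xs"

definition lin_on :: "('k \<Rightarrow> 'a::ab_group_add \<Rightarrow> 'a) \<Rightarrow> ('k \<Rightarrow> 'b::ab_group_add \<Rightarrow> 'b)
    \<Rightarrow> 'a set \<Rightarrow> ('a \<Rightarrow> 'b) \<Rightarrow> bool" where
  "lin_on sa sb S f \<longleftrightarrow> (\<forall>x\<in>S. \<forall>y\<in>S. f (x + y) = f x + f y) \<and> (\<forall>c. \<forall>x\<in>S. f (sa c x) = sb c (f x))"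

definition lie_algebra :: "('k::field \<Rightarrow> 'g::ab_group_add \<Rightarrow> 'g) \<Rightarrow> ('g \<Rightarrow> 'g \<Rightarrow> 'g) \<Rightarrow> bool" where
  "lie_algebra sg br \<longleftrightarrow> vector_space sg \<and>
     (\<forall>x y z. br (x + y) z = br x z + br y z) \<and>
     (\<forall>x y z. br x (y + z) = br x y + br x z) \<and>
     (\<forall>c x y. br (sg c x) y = sg c (br x y)) \<and>
     (\<forall>c x y. br x (sg c y) = sg c (br x y)) \<and>
     (\<forall>x. br x x = 0) \<and>
     (\<forall>x y z. br x (br y z) + br y (br z x) + br z (br x y) = 0)"

definition finite_dim :: "('k::field \<Rightarrow> 'g::ab_group_add \<Rightarrow> 'g) \<Rightarrow> bool" where
  "finite_dim sg \<longleftrightarrow> (\<exists>B. finite B \<and> module.span sg B = UNIV)"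

text \<open>A (bounded) dg g-module: components W^n (subspaces of an ambient space),
  action and differential given degreewise.\<close>
definition dg_module :: "('k::field \<Rightarrow> 'g::ab_group_add \<Rightarrow> 'g) \<Rightarrow> ('g \<Rightarrow> 'g \<Rightarrow> 'g)
    \<Rightarrow> ('k \<Rightarrow> 'w::ab_group_add \<Rightarrow> 'w) \<Rightarrow> (int \<Rightarrow> 'w set)
    \<Rightarrow> (int \<Rightarrow> 'g \<Rightarrow> 'w \<Rightarrow> 'w) \<Rightarrow> (int \<Rightarrow> 'w \<Rightarrow> 'w) \<Rightarrow> bool" where
  "dg_module sg br sw Wc act d \<longleftrightarrow> vector_space sw \<and>
     (\<forall>n. module.subspace sw (Wc n)) \<and>
     (\<forall>n x. \<forall>v\<in>Wc n. act n x v \<in> Wc n) \<and>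
     (\<forall>n x. lin_on sw sw (Wc n) (act n x)) \<and>
     (\<forall>n x y. \<forall>v\<in>Wc n. act n (x + y) v = act n x v + act n y v) \<and>
     (\<forall>n c x. \<forall>v\<in>Wc n. act n (sg c x) v = sw c (act n x v)) \<and>
     (\<forall>n x y. \<forall>v\<in>Wc n. act n (br x y) v = act n x (act n y v) - act n y (act n x v)) \<and>
     (\<forall>n. \<forall>v\<in>Wc n. d n v \<in> Wc (n + 1)) \<and>
     (\<forall>n. lin_on sw sw (Wc n) (d n)) \<and>
     (\<forall>n. \<forall>v\<in>Wc n. d (n + 1) (d n v) = 0) \<and>
     (\<forall>n x. \<forall>v\<in>Wc n. d n (act n x v) = act (n + 1) x (d n v)) \<and>
     finite {n. Wc n \<noteq> {0}}"

definition nonneg :: "(int \<Rightarrow> 'w::zero set) \<Rightarrow> bool" where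
  "nonneg Wc \<longleftrightarrow> (\<forall>n<0. Wc n = {0})"

section \<open>Alternating forms: \<wedge>^p g^\<or> \<otimes> S realised as alternating p-linear maps g^p \<rightarrow> S\<close>

definition alt_forms :: "('k \<Rightarrow> 'g::ab_group_add \<Rightarrow> 'g) \<Rightarrow> ('k \<Rightarrow> 'w::ab_group_add \<Rightarrow> 'w) \<Rightarrow> nat
    \<Rightarrow> 'w set \<Rightarrow> ('g list \<Rightarrow> 'w) set" where
  "alt_forms sg sw p S = {f.
     (\<forall>xs. length xs = p \<longrightarrow> f xs \<in> S) \<and>
     (\<forall>xs. length xs \<noteq> p \<longrightarrow> f xs = 0) \<and>
     (\<forall>xs i y z. length xs = p \<and> i < p \<longrightarrow> f (xs[i := y + z]) = f (xs[i := y]) + f (xs[i := z])) \<and>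
     (\<forall>xs i c y. length xs = p \<and> i < p \<longrightarrow> f (xs[i := sg c y]) = sw c (f (xs[i := y]))) \<and>
     (\<forall>xs i j. length xs = p \<and> i < j \<and> j < p \<and> xs ! i = xs ! j \<longrightarrow> f xs = 0)}"

definition ce_diff :: "('g::ab_group_add \<Rightarrow> 'g \<Rightarrow> 'g) \<Rightarrow> ('g \<Rightarrow> 'w \<Rightarrow> 'w) \<Rightarrow> ('g list \<Rightarrow> 'w) \<Rightarrow> 'g list \<Rightarrow> 'w::ab_group_add" where
  "ce_diff br act f xs =
     (\<Sum>i<length xs. isgn (int i) (act (xs ! i) (f (del i xs)))) +
     (\<Sum>j<length xs. \<Sum>i<j. isgn (int (i + j)) (f (br (xs ! i) (xs ! j) # del i (del j xs))))"

definition shuffle_ext :: "nat \<Rightarrow> nat \<Rightarrow> ('g::ab_group_add list \<Rightarrow> 'a) \<Rightarrow> ('a \<Rightarrow> 'g list \<Rightarrow> 'b::ab_group_add) \<Rightarrow> 'g list \<Rightarrow> 'b" where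
  "shuffle_ext p q phi F xs =
     (if length xs = p + q then
        (\<Sum>I\<in>{I. I \<subseteq> {..<p + q} \<and> card I = p}.
           isgn (int ((\<Sum>i\<in>I. i) + p * (p - 1) div 2)) (F (phi (nths xs I)) (nths xs ({..<p + q} - I))))
      else 0)"

text \<open>Degree n elements of \<Omega>_g(W): families indexed by the W-degree q of (n-q)-forms with values in W^q.\<close>
definition omega :: "('k \<Rightarrow> 'g::ab_group_add \<Rightarrow> 'g) \<Rightarrow> ('k \<Rightarrow> 'w::ab_group_add \<Rightarrow> 'w) \<Rightarrow> (int \<Rightarrow> 'w set) \<Rightarrow> int
    \<Rightarrow> (int \<Rightarrow> 'g list \<Rightarrow> 'w) set" where
  "omega sg sw Wc n = {f. \<forall>q. (q \<le> n \<longrightarrow> f q \<in> alt_forms sg sw (nat (n - q)) (Wc q)) \<and>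
                            (n < q \<longrightarrow> f q = (\<lambda>_. 0))}"

text \<open>Total differential d_CE + d^W on a degree n element, with d^W(\<omega>\<otimes>w) = (-1)^p \<omega>\<otimes>dw.\<close>
definition dtot :: "('g::ab_group_add \<Rightarrow> 'g \<Rightarrow> 'g) \<Rightarrow> (int \<Rightarrow> 'g \<Rightarrow> 'w \<Rightarrow> 'w) \<Rightarrow> (int \<Rightarrow> 'w \<Rightarrow> 'w) \<Rightarrow> int
    \<Rightarrow> (int \<Rightarrow> 'g list \<Rightarrow> 'w::ab_group_add) \<Rightarrow> int \<Rightarrow> 'g list \<Rightarrow> 'w" where
  "dtot br act d n f = (\<lambda>q. if q \<le> n + 1 then
       (\<lambda>xs. ce_diff br (act q) (f q) xs + isgn (n + 1 - q) (d (q - 1) (f (q - 1) xs)))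
     else (\<lambda>_. 0))"

text \<open>Generators of a degree 0 \<Omega>_g-linear map \<Omega>_g(V) \<rightarrow> \<Omega>_g(g): alpha k : V^k \<rightarrow> \<wedge>^k g^\<or> \<otimes> g.\<close>
definition deg0_gens :: "('k \<Rightarrow> 'g \<Rightarrow> 'g) \<Rightarrow> ('k \<Rightarrow> 'v::ab_group_add \<Rightarrow> 'v) \<Rightarrow> (int \<Rightarrow> 'v set)
    \<Rightarrow> (int \<Rightarrow> 'v \<Rightarrow> 'g list \<Rightarrow> 'g::ab_group_add) set" where
  "deg0_gens sg sv Vc = {\<alpha>. \<forall>k.
     (\<forall>v. v \<notin> Vc k \<longrightarrow> \<alpha> k v = (\<lambda>_. 0)) \<and>
     (\<forall>v\<in>Vc k. \<alpha> k v \<in> alt_forms sg sg (nat k) UNIV) \<and>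
     lin_on sv (\<lambda>c F xs. sg c (F xs)) (Vc k) (\<alpha> k)}"

text \<open>Generators of a degree -1 \<Omega>_g-linear map: h k : V^k \<rightarrow> \<wedge>^(k-1) g^\<or> \<otimes> g (zero for k \<le> 0).\<close>
definition degm1_gens :: "('k \<Rightarrow> 'g \<Rightarrow> 'g) \<Rightarrow> ('k \<Rightarrow> 'v::ab_group_add \<Rightarrow> 'v) \<Rightarrow> (int \<Rightarrow> 'v set)
    \<Rightarrow> (int \<Rightarrow> 'v \<Rightarrow> 'g list \<Rightarrow> 'g::ab_group_add) set" where
  "degm1_gens sg sv Vc = {h. \<forall>k.
     (\<forall>v. v \<notin> Vc k \<longrightarrow> h k v = (\<lambda>_. 0)) \<and>
     (k \<le> 0 \<longrightarrow> (\<forall>v. h k v = (\<lambda>_. 0))) \<and>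
     (\<forall>v\<in>Vc k. h k v \<in> alt_forms sg sg (nat (k - 1)) UNIV) \<and>
     lin_on sv (\<lambda>c F xs. sg c (F xs)) (Vc k) (h k)}"

text \<open>Omega-linear extension of degree 0: \<omega>\<otimes>v \<mapsto> \<omega> \<wedge> alpha(v), applied to a degree n element.\<close>
definition ext0 :: "(int \<Rightarrow> 'v \<Rightarrow> 'g list \<Rightarrow> 'g::ab_group_add) \<Rightarrow> int \<Rightarrow> (int \<Rightarrow> 'g list \<Rightarrow> 'v) \<Rightarrow> 'g list \<Rightarrow> 'g" where
  "ext0 \<alpha> n f = (\<lambda>xs. \<Sum>q\<in>{0..n}. shuffle_ext (nat (n - q)) (nat q) (f q) (\<alpha> q) xs)"

text \<open>Omega-linear extension of degree -1 (Koszul sign): \<omega>\<otimes>v \<mapsto> (-1)^|\<omega>| \<omega> \<wedge> h(v).\<close>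
definition ext1 :: "(int \<Rightarrow> 'v \<Rightarrow> 'g list \<Rightarrow> 'g::ab_group_add) \<Rightarrow> int \<Rightarrow> (int \<Rightarrow> 'g list \<Rightarrow> 'v) \<Rightarrow> 'g list \<Rightarrow> 'g" where
  "ext1 h n f = (\<lambda>xs. \<Sum>q\<in>{0..n}. isgn (n - q) (shuffle_ext (nat (n - q)) (nat q - 1) (f q) (h q) xs))"

definition LP_structures :: "('k \<Rightarrow> 'g \<Rightarrow> 'g) \<Rightarrow> ('g \<Rightarrow> 'g \<Rightarrow> 'g::ab_group_add) \<Rightarrow> ('k \<Rightarrow> 'v::ab_group_add \<Rightarrow> 'v)
    \<Rightarrow> (int \<Rightarrow> 'v set) \<Rightarrow> (int \<Rightarrow> 'g \<Rightarrow> 'v \<Rightarrow> 'v) \<Rightarrow> (int \<Rightarrow> 'v \<Rightarrow> 'v)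
    \<Rightarrow> (int \<Rightarrow> 'v \<Rightarrow> 'g list \<Rightarrow> 'g) set" where
  "LP_structures sg br sv Vc actV dV = {\<alpha> \<in> deg0_gens sg sv Vc.
     \<forall>n. \<forall>f\<in>omega sg sv Vc n. ext0 \<alpha> (n + 1) (dtot br actV dV n f) = ce_diff br br (ext0 \<alpha> n f)}"

definition LP_homotopic :: "('k \<Rightarrow> 'g \<Rightarrow> 'g) \<Rightarrow> ('g \<Rightarrow> 'g \<Rightarrow> 'g::ab_group_add) \<Rightarrow> ('k \<Rightarrow> 'v::ab_group_add \<Rightarrow> 'v)
    \<Rightarrow> (int \<Rightarrow> 'v set) \<Rightarrow> (int \<Rightarrow> 'g \<Rightarrow> 'v \<Rightarrow> 'v) \<Rightarrow> (int \<Rightarrow> 'v \<Rightarrow> 'v)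
    \<Rightarrow> (int \<Rightarrow> 'v \<Rightarrow> 'g list \<Rightarrow> 'g) \<Rightarrow> (int \<Rightarrow> 'v \<Rightarrow> 'g list \<Rightarrow> 'g) \<Rightarrow> bool" where
  "LP_homotopic sg br sv Vc actV dV \<alpha> \<alpha>' \<longleftrightarrow> (\<exists>h\<in>degm1_gens sg sv Vc.
     \<forall>n. \<forall>f\<in>omega sg sv Vc n. \<forall>xs.
        ext0 \<alpha>' n f xs - ext0 \<alpha> n f xs =
        ce_diff br br (ext1 h n f) xs + ext1 h (n + 1) (dtot br actV dV n f) xs)"

text \<open>Hom(V^k, g) sits in degree -k.\<close>
definition Hom_c :: "('k \<Rightarrow> 'g \<Rightarrow> 'g) \<Rightarrow> ('k \<Rightarrow> 'v::ab_group_add \<Rightarrow> 'v) \<Rightarrow> (int \<Rightarrow> 'v set)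
    \<Rightarrow> int \<Rightarrow> ('v \<Rightarrow> 'g::ab_group_add) set" where
  "Hom_c sg sv Vc n = {\<phi>. lin_on sv sg (Vc (- n)) \<phi> \<and> (\<forall>v. v \<notin> Vc (- n) \<longrightarrow> \<phi> v = 0)}"

definition Hom_scale :: "('k \<Rightarrow> 'g::ab_group_add \<Rightarrow> 'g) \<Rightarrow> 'k \<Rightarrow> ('v \<Rightarrow> 'g) \<Rightarrow> 'v \<Rightarrow> 'g" where
  "Hom_scale sg c \<phi> = (\<lambda>v. sg c (\<phi> v))"

definition Hom_act :: "('g \<Rightarrow> 'g \<Rightarrow> 'g::ab_group_add) \<Rightarrow> (int \<Rightarrow> 'v set) \<Rightarrow> (int \<Rightarrow> 'g \<Rightarrow> 'v \<Rightarrow> 'v)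
    \<Rightarrow> int \<Rightarrow> 'g \<Rightarrow> ('v \<Rightarrow> 'g) \<Rightarrow> 'v \<Rightarrow> 'g" where
  "Hom_act br Vc actV n x \<phi> = (\<lambda>v. if v \<in> Vc (- n) then br x (\<phi> v) - \<phi> (actV (- n) x v) else 0)"

text \<open>Koszul sign: d\<phi> = d_g \<circ> \<phi> - (-1)^|\<phi>| \<phi> \<circ> d_V, with d_g = 0 and |\<phi>| = n.\<close>
definition Hom_d :: "(int \<Rightarrow> 'v set) \<Rightarrow> (int \<Rightarrow> 'v \<Rightarrow> 'v) \<Rightarrow> int \<Rightarrow> ('v \<Rightarrow> 'g::ab_group_add) \<Rightarrow> 'v \<Rightarrow> 'g" where
  "Hom_d Vc dV n \<phi> = (\<lambda>v. if v \<in> Vc (- n - 1) then isgn (n + 1) (\<phi> (dV (- n - 1) v)) else 0)"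

definition cocycles0 :: "('k \<Rightarrow> 'g \<Rightarrow> 'g) \<Rightarrow> ('g \<Rightarrow> 'g \<Rightarrow> 'g::ab_group_add) \<Rightarrow> ('k \<Rightarrow> 'v::ab_group_add \<Rightarrow> 'v)
    \<Rightarrow> (int \<Rightarrow> 'v set) \<Rightarrow> (int \<Rightarrow> 'g \<Rightarrow> 'v \<Rightarrow> 'v) \<Rightarrow> (int \<Rightarrow> 'v \<Rightarrow> 'v)
    \<Rightarrow> (int \<Rightarrow> 'g list \<Rightarrow> 'v \<Rightarrow> 'g) set" where
  "cocycles0 sg br sv Vc actV dV = {c \<in> omega sg (Hom_scale sg) (Hom_c sg sv Vc) 0.
     dtot br (Hom_act br Vc actV) (Hom_d Vc dV) 0 c = (\<lambda>_ _. 0)}"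

definition coboundaries0 :: "('k \<Rightarrow> 'g \<Rightarrow> 'g) \<Rightarrow> ('g \<Rightarrow> 'g \<Rightarrow> 'g::ab_group_add) \<Rightarrow> ('k \<Rightarrow> 'v::ab_group_add \<Rightarrow> 'v)
    \<Rightarrow> (int \<Rightarrow> 'v set) \<Rightarrow> (int \<Rightarrow> 'g \<Rightarrow> 'v \<Rightarrow> 'v) \<Rightarrow> (int \<Rightarrow> 'v \<Rightarrow> 'v)
    \<Rightarrow> (int \<Rightarrow> 'g list \<Rightarrow> 'v \<Rightarrow> 'g) set" where
  "coboundaries0 sg br sv Vc actV dV =
     dtot br (Hom_act br Vc actV) (Hom_d Vc dV) (-1) ` omega sg (Hom_scale sg) (Hom_c sg sv Vc) (-1)"

definition cmap :: "(int \<Rightarrow> 'v \<Rightarrow> 'g list \<Rightarrow> 'g::zero) \<Rightarrow> int \<Rightarrow> 'g list \<Rightarrow> 'v \<Rightarrow> 'g" where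
  "cmap \<alpha> = (\<lambda>q xs v. if q \<le> 0 then \<alpha> (- q) v xs else 0)"

end

theory Submission
  imports Defs
begin

lemma sum_fun_apply: "(\<Sum>i\<in>A. f i) v = (\<Sum>i\<in>A. f i v)"
  by (induct A rule: infinite_finite_induct) auto

lemma isgn_0[simp]: "isgn 0 a = a" by (simp add: isgn_def)
lemma isgn_add: "isgn n (a + b) = isgn n a + isgn n b" by (simp add: isgn_def)
lemma isgn_diff: "isgn n (a - b) = isgn n a - isgn n b" by (simp add: isgn_def)
lemma isgn_minus: "isgn n (- a) = - isgn n a" by (simp add: isgn_def)
lemma isgn_zero[simp]: "isgn n 0 = 0" by (simp add: isgn_def)
lemma isgn_isgn: "isgn m (isgn n a) = isgn (m + n) a" by (simp add: isgn_def)
lemma isgn_plus1: "isgn (n + 1) a = - isgn n a" by (simp add: isgn_def)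
lemma isgn_sum: "isgn n (\<Sum>i\<in>A. f i) = (\<Sum>i\<in>A. isgn n (f i))"
  by (simp add: isgn_def sum_negf)
lemma isgn_fun_apply: "isgn n f v = isgn n (f v)" by (simp add: isgn_def)
lemma isgn_cong2: "even (m - n) \<Longrightarrow> isgn m a = isgn n a"
  by (simp add: isgn_def)
lemma isgn_1_plus[simp]: "isgn (1 + n) a = - isgn n a" by (simp add: isgn_def)
lemma isgn_Suc: "isgn (int (Suc i)) a = - isgn (int i) a" by (simp add: isgn_def)

lemma del_0_Cons[simp]: "del 0 (x # xs) = xs" by (simp add: del_def)
lemma del_Suc_Cons[simp]: "del (Suc i) (x # xs) = x # del i xs" by (simp add: del_def)
lemma length_del[simp]: "i < length xs \<Longrightarrow> length (del i xs) = length xs - 1"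
  by (simp add: del_def)
lemma length_del'[simp]: "length (del i xs) = (if i < length xs then length xs - 1 else length xs)"
  by (simp add: del_def)

definition ix :: "'g \<Rightarrow> ('g list \<Rightarrow> 'a) \<Rightarrow> 'g list \<Rightarrow> 'a" where
  "ix x \<psi> = (\<lambda>ys. \<psi> (x # ys))"

definition asym :: "('g list \<Rightarrow> 'a::ab_group_add) \<Rightarrow> bool" where
  "asym \<psi> \<longleftrightarrow> (\<forall>as x y bs. \<psi> (as @ x # y # bs) = - \<psi> (as @ y # x # bs))"

definition lie :: "('g \<Rightarrow> 'g \<Rightarrow> 'g) \<Rightarrow> ('g \<Rightarrow> 'a \<Rightarrow> 'a) \<Rightarrow> 'g \<Rightarrow> ('g list \<Rightarrow> 'a::ab_group_add) \<Rightarrow> 'g list \<Rightarrow> 'a" where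
  "lie br act x \<psi> ys = act x (\<psi> ys) - (\<Sum>i<length ys. \<psi> (ys[i := br x (ys ! i)]))"

lemma asym_ix: "asym \<psi> \<Longrightarrow> asym (ix x \<psi>)"
  unfolding asym_def ix_def by (metis append_Cons)

lemma asym_swap: "asym \<psi> \<Longrightarrow> \<psi> (x # y # bs) = - \<psi> (y # x # bs)"
  unfolding asym_def by (metis append_Nil)

lemma move_lemma:
  assumes "asym \<psi>" "j < length ys"
  shows "\<psi> (z # del j ys) = isgn (int j) (\<psi> (ys[j := z]))"
  using assms
proof (induct j arbitrary: \<psi> ys)
  case 0
  then show ?case by (cases ys) auto
next
  case (Suc j)
  then obtain y ys' where ys: "ys = y # ys'" and j: "j < length ys'" by (cases ys) auto
  have "\<psi> (z # del (Suc j) ys) = - \<psi> (y # z # del j ys')"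
    using asym_swap[OF Suc.prems(1), of z y "del j ys'"] ys by simp
  also have "\<psi> (y # z # del j ys') = ix y \<psi> (z # del j ys')" by (simp add: ix_def)
  also have "\<dots> = isgn (int j) (ix y \<psi> (ys'[j := z]))"
    using Suc.hyps[OF asym_ix[OF Suc.prems(1)] j] .
  finally show ?case using ys by (simp add: ix_def isgn_Suc isgn_minus)
qed

lemma cartan:
  assumes "asym \<psi>"
  shows "ce_diff br act \<psi> (x # xs) = lie br act x \<psi> xs - ce_diff br act (ix x \<psi>) xs"
proof -
  let ?n = "length xs"
  have A: "(\<Sum>i<length (x#xs). isgn (int i) (act ((x # xs) ! i) (\<psi> (del i (x # xs)))))
     = act x (\<psi> xs) - (\<Sum>i<?n. isgn (int i) (act (xs ! i) (ix x \<psi> (del i xs))))"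
    by (simp only: length_Cons sum.lessThan_Suc_shift) (simp add: isgn_Suc ix_def sum_negf)
  have B1: "\<And>j. j < ?n \<Longrightarrow> isgn (int (0 + Suc j)) (\<psi> (br ((x#xs) ! 0) ((x#xs) ! Suc j) # del 0 (del (Suc j) (x # xs))))
       = - \<psi> (xs[j := br x (xs ! j)])"
    using move_lemma[OF assms] by (simp add: isgn_def)
  have B2: "\<And>i j. i < j \<Longrightarrow> isgn (int (Suc i + Suc j)) (\<psi> (br ((x#xs) ! Suc i) ((x#xs) ! Suc j) # del (Suc i) (del (Suc j) (x # xs))))
       = - isgn (int (i + j)) (ix x \<psi> (br (xs ! i) (xs ! j) # del i (del j xs)))"
  proof -
    fix i j :: nat assume "i < j"
    show "?thesis i j"
      using asym_swap[OF assms, of "br (xs ! i) (xs ! j)" x "del i (del j xs)"] by (simp add: ix_def isgn_def)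
  qed
  have B: "(\<Sum>j<length (x#xs). \<Sum>i<j. isgn (int (i + j)) (\<psi> (br ((x#xs) ! i) ((x#xs) ! j) # del i (del j (x # xs)))))
     = - (\<Sum>j<?n. \<psi> (xs[j := br x (xs ! j)]))
       - (\<Sum>j<?n. \<Sum>i<j. isgn (int (i + j)) (ix x \<psi> (br (xs ! i) (xs ! j) # del i (del j xs))))"
  proof -
    have "(\<Sum>j<length (x#xs). \<Sum>i<j. isgn (int (i + j)) (\<psi> (br ((x#xs) ! i) ((x#xs) ! j) # del i (del j (x # xs)))))
      = (\<Sum>j<?n. \<Sum>i<Suc j. isgn (int (i + Suc j)) (\<psi> (br ((x#xs) ! i) ((x#xs) ! Suc j) # del i (del (Suc j) (x # xs)))))"
      by (simp only: length_Cons sum.lessThan_Suc_shift[where n="length xs"] lessThan_0 sum.empty add_0_left)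
    also have "\<dots> = (\<Sum>j<?n. isgn (int (0 + Suc j)) (\<psi> (br ((x#xs) ! 0) ((x#xs) ! Suc j) # del 0 (del (Suc j) (x # xs))))
        + (\<Sum>i<j. isgn (int (Suc i + Suc j)) (\<psi> (br ((x#xs) ! Suc i) ((x#xs) ! Suc j) # del (Suc i) (del (Suc j) (x # xs))))))"
      by (simp only: sum.lessThan_Suc_shift)
    also have "\<dots> = (\<Sum>j<?n. - \<psi> (xs[j := br x (xs ! j)])
        + (\<Sum>i<j. - isgn (int (i + j)) (ix x \<psi> (br (xs ! i) (xs ! j) # del i (del j xs)))))"
      by (rule sum.cong[OF refl], subst B1, simp, rule arg_cong[where f="\<lambda>u. _ + u"], rule sum.cong[OF refl], rule B2, simp)
    also have "\<dots> = - (\<Sum>j<?n. \<psi> (xs[j := br x (xs ! j)]))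
       - (\<Sum>j<?n. \<Sum>i<j. isgn (int (i + j)) (ix x \<psi> (br (xs ! i) (xs ! j) # del i (del j xs))))"
      by (simp only: sum.distrib sum_negf diff_conv_add_uminus)
    finally show ?thesis .
  qed
  show ?thesis
    unfolding ce_diff_def lie_def A B by (simp add: algebra_simps)
qed


lemma shuffle_zero1:
  assumes "\<forall>ys. \<phi> ys = 0" "\<forall>ys. F 0 ys = 0"
  shows "shuffle_ext p q \<phi> F xs = 0"
  using assms by (simp add: shuffle_ext_def)

lemma shuffle_zero2:
  assumes "\<forall>v ys. F v ys = 0"
  shows "shuffle_ext p q \<phi> F xs = 0"
  using assms by (simp add: shuffle_ext_def)

lemma tri_nat: "Suc m * (Suc m - 1) div 2 = m * (m - 1) div 2 + m"
proof -
  have "Suc m * m = m * (m - 1) + 2 * m" by (cases m) (simp_all add: algebra_simps)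
  then show ?thesis by simp
qed

lemma sum_Suc_image: "finite J \<Longrightarrow> (\<Sum>i\<in>Suc ` J. i) = (\<Sum>i\<in>J. i) + card J"
proof -
  assume "finite J"
  then have "sum Suc J = (\<Sum>i\<in>J. i) + card J" by (induct rule: finite_induct) auto
  then show ?thesis by (simp add: sum.reindex)
qed

lemma Suc_img_set[simp]: "{j. Suc j \<in> Suc ` J} = J" by auto
lemma Suc_img_compl[simp]: "{j. j < N \<and> Suc j \<notin> Suc ` J} = {..<N} - J" by auto

lemma nths_insert0: "nths (x # xs) (insert 0 (Suc ` J)) = x # nths xs J"
  by (simp add: nths_Cons)

lemma nths_Suc_image: "nths (x # xs) (Suc ` J) = nths xs J"
  by (simp add: nths_Cons)

lemma compl_insert0: "{j. Suc j \<in> {..<Suc N} - insert 0 (Suc ` J)} = {..<N} - J"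
  by auto

lemma nths_compl_insert0: "nths (x # xs) ({..<Suc N} - insert 0 (Suc ` J)) = nths xs ({..<N} - J)"
  by (simp add: nths_Cons compl_insert0)

lemma nths_compl_Suc: "nths (x # xs) ({..<Suc N} - Suc ` J) = x # nths xs ({..<N} - J)"
proof -
  have "{j. Suc j \<in> {..<Suc N} - Suc ` J} = {..<N} - J" by auto
  then show ?thesis by (simp add: nths_Cons)
qed

lemma bij_ins0:
  "bij_betw (\<lambda>J. insert 0 (Suc ` J)) {J. J \<subseteq> {..<N} \<and> card J = m}
     {I. I \<subseteq> {..<Suc N} \<and> card I = Suc m \<and> 0 \<in> I}"
proof (rule bij_betw_byWitness[where f'="\<lambda>I. {j. Suc j \<in> I}"])
  show "\<forall>a\<in>{J. J \<subseteq> {..<N} \<and> card J = m}. {j. Suc j \<in> insert 0 (Suc ` a)} = a" by auto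
  show "\<forall>a'\<in>{I. I \<subseteq> {..<Suc N} \<and> card I = Suc m \<and> 0 \<in> I}. insert 0 (Suc ` {j. Suc j \<in> a'}) = a'"
    by (auto, metis image_iff mem_Collect_eq not0_implies_Suc)
  show "(\<lambda>J. insert 0 (Suc ` J)) ` {J. J \<subseteq> {..<N} \<and> card J = m} \<subseteq> {I. I \<subseteq> {..<Suc N} \<and> card I = Suc m \<and> 0 \<in> I}"
  proof
    fix I assume "I \<in> (\<lambda>J. insert 0 (Suc ` J)) ` {J. J \<subseteq> {..<N} \<and> card J = m}"
    then obtain J where J: "J \<subseteq> {..<N}" "card J = m" "I = insert 0 (Suc ` J)" by auto
    have "finite J" using J(1) finite_subset by blast
    then have "card I = Suc m" using J by (simp add: card_image)
    moreover have "I \<subseteq> {..<Suc N}" using J by auto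
    ultimately show "I \<in> {I. I \<subseteq> {..<Suc N} \<and> card I = Suc m \<and> 0 \<in> I}" using J by auto
  qed
  show "(\<lambda>I. {j. Suc j \<in> I}) ` {I. I \<subseteq> {..<Suc N} \<and> card I = Suc m \<and> 0 \<in> I} \<subseteq> {J. J \<subseteq> {..<N} \<and> card J = m}"
  proof
    fix J assume "J \<in> (\<lambda>I. {j. Suc j \<in> I}) ` {I. I \<subseteq> {..<Suc N} \<and> card I = Suc m \<and> 0 \<in> I}"
    then obtain I where I: "I \<subseteq> {..<Suc N}" "card I = Suc m" "0 \<in> I" "J = {j. Suc j \<in> I}" by auto
    have IJ: "I = insert 0 (Suc ` J)" using I by (auto, metis image_iff mem_Collect_eq not0_implies_Suc)
    have "J \<subseteq> {..<N}" using I by auto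
    moreover have "finite J" using calculation finite_subset by blast
    moreover have "card I = Suc (card J)" using IJ calculation by (simp add: card_image)
    ultimately show "J \<in> {J. J \<subseteq> {..<N} \<and> card J = m}" using I by auto
  qed
qed

lemma bij_Suc_img:
  "bij_betw (\<lambda>J. Suc ` J) {J. J \<subseteq> {..<N} \<and> card J = m}
     {I. I \<subseteq> {..<Suc N} \<and> card I = m \<and> 0 \<notin> I}"
proof (rule bij_betw_byWitness[where f'="\<lambda>I. {j. Suc j \<in> I}"])
  show "\<forall>a\<in>{J. J \<subseteq> {..<N} \<and> card J = m}. {j. Suc j \<in> Suc ` a} = a" by auto
  show "\<forall>a'\<in>{I. I \<subseteq> {..<Suc N} \<and> card I = m \<and> 0 \<notin> I}. Suc ` {j. Suc j \<in> a'} = a'"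
    by (auto, metis image_iff mem_Collect_eq not0_implies_Suc)
  show "(\<lambda>J. Suc ` J) ` {J. J \<subseteq> {..<N} \<and> card J = m} \<subseteq> {I. I \<subseteq> {..<Suc N} \<and> card I = m \<and> 0 \<notin> I}"
    by (auto simp: card_image)
  show "(\<lambda>I. {j. Suc j \<in> I}) ` {I. I \<subseteq> {..<Suc N} \<and> card I = m \<and> 0 \<notin> I} \<subseteq> {J. J \<subseteq> {..<N} \<and> card J = m}"
  proof
    fix J assume "J \<in> (\<lambda>I. {j. Suc j \<in> I}) ` {I. I \<subseteq> {..<Suc N} \<and> card I = m \<and> 0 \<notin> I}"
    then obtain I where I: "I \<subseteq> {..<Suc N}" "card I = m" "0 \<notin> I" "J = {j. Suc j \<in> I}" by auto
    have IJ: "I = Suc ` J" using I by (auto, metis image_iff mem_Collect_eq not0_implies_Suc)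
    have "J \<subseteq> {..<N}" using I by auto
    moreover have "card I = card J" using IJ by (simp add: card_image)
    ultimately show "J \<in> {J. J \<subseteq> {..<N} \<and> card J = m}" using I by auto
  qed
qed


lemma sum_split_pred:
  assumes "finite {I. P I}"
  shows "sum f {I. P I} = sum f {I. P I \<and> Q I} + sum f {I. P I \<and> \<not> Q I}"
proof -
  have "sum f {I. P I} = sum f ({I. P I} \<inter> {I. Q I}) + sum f ({I. P I} - {I. Q I})"
    by (rule sum.Int_Diff[OF assms])
  moreover have "{I. P I} \<inter> {I. Q I} = {I. P I \<and> Q I}" "{I. P I} - {I. Q I} = {I. P I \<and> \<not> Q I}" by auto
  ultimately show ?thesis by simp
qed

lemma shuffle_Cons:
  fixes \<phi> :: "'g::ab_group_add list \<Rightarrow> 'a::ab_group_add" and F :: "'a \<Rightarrow> 'g list \<Rightarrow> 'b::ab_group_add"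
  assumes \<phi>0: "\<And>ys. length ys \<noteq> p \<Longrightarrow> \<phi> ys = 0"
    and F0: "\<And>v ys. length ys \<noteq> q \<Longrightarrow> F v ys = 0" and Fz: "\<And>ys. F 0 ys = 0"
  shows "shuffle_ext p q \<phi> F (x # xs) = shuffle_ext (p - 1) q (ix x \<phi>) F xs
           + isgn (int p) (shuffle_ext p (q - 1) \<phi> (\<lambda>v. ix x (F v)) xs)"
proof -
  define N where "N = length xs"
  have T1z: "shuffle_ext (p - 1) q (ix x \<phi>) F xs = 0" if "p = 0"
    by (rule shuffle_zero1) (use that \<phi>0 Fz in \<open>auto simp: ix_def\<close>)
  have T2z: "shuffle_ext p (q - 1) \<phi> (\<lambda>v. ix x (F v)) xs = 0" if "q = 0"
    by (rule shuffle_zero2) (use that F0 in \<open>auto simp: ix_def\<close>)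
  show ?thesis
  proof (cases "Suc N = p + q")
    case False
    have L: "shuffle_ext p q \<phi> F (x # xs) = 0" using False by (simp add: shuffle_ext_def N_def)
    have A: "shuffle_ext (p - 1) q (ix x \<phi>) F xs = 0"
    proof (cases "p = 0")
      case True then show ?thesis by (rule T1z)
    next
      case False then show ?thesis using \<open>Suc N \<noteq> p + q\<close> by (simp add: shuffle_ext_def N_def)
    qed
    have B: "shuffle_ext p (q - 1) \<phi> (\<lambda>v. ix x (F v)) xs = 0"
    proof (cases "q = 0")
      case True then show ?thesis by (rule T2z)
    next
      case False then show ?thesis using \<open>Suc N \<noteq> p + q\<close> by (simp add: shuffle_ext_def N_def)
    qed
    show ?thesis using L A B by simp
  next
    case True
    define S where "S = (\<lambda>I. isgn (int ((\<Sum>i\<in>I. i) + p * (p - 1) div 2))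
        (F (\<phi> (nths (x#xs) I)) (nths (x#xs) ({..<Suc N} - I))))"
    have fin: "finite {I. I \<subseteq> {..<Suc N} \<and> card I = p}"
      by (rule finite_subset[where B="Pow {..<Suc N}"]) auto
    have "shuffle_ext p q \<phi> F (x # xs) = sum S {I. I \<subseteq> {..<Suc N} \<and> card I = p}"
      using True by (simp add: shuffle_ext_def N_def S_def)
    also have "\<dots> = sum S {I. (I \<subseteq> {..<Suc N} \<and> card I = p) \<and> 0 \<in> I}
                   + sum S {I. (I \<subseteq> {..<Suc N} \<and> card I = p) \<and> 0 \<notin> I}"
      by (rule sum_split_pred) (use fin in simp)
    also have "sum S {I. (I \<subseteq> {..<Suc N} \<and> card I = p) \<and> 0 \<in> I} = shuffle_ext (p - 1) q (ix x \<phi>) F xs"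
    proof (cases p)
      case 0
      have E: "{I. (I \<subseteq> {..<Suc N} \<and> card I = p) \<and> 0 \<in> I} = {}"
        using 0 by (auto dest: finite_subset[OF _ finite_lessThan])
      show ?thesis unfolding E using T1z[OF 0] by simp
    next
      case (Suc m)
      have eq: "{I. (I \<subseteq> {..<Suc N} \<and> card I = p) \<and> 0 \<in> I} = {I. I \<subseteq> {..<Suc N} \<and> card I = Suc m \<and> 0 \<in> I}"
        using Suc by auto
      have "sum S {I. (I \<subseteq> {..<Suc N} \<and> card I = p) \<and> 0 \<in> I}
          = (\<Sum>J\<in>{J. J \<subseteq> {..<N} \<and> card J = m}. S (insert 0 (Suc ` J)))"
        unfolding eq by (rule sum.reindex_bij_betw[OF bij_ins0, symmetric])
      also have "\<dots> = (\<Sum>J\<in>{J. J \<subseteq> {..<N} \<and> card J = m}.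
           isgn (int ((\<Sum>i\<in>J. i) + m * (m - 1) div 2)) (F (ix x \<phi> (nths xs J)) (nths xs ({..<N} - J))))"
      proof (rule sum.cong[OF refl])
        fix J assume "J \<in> {J. J \<subseteq> {..<N} \<and> card J = m}"
        then have J: "J \<subseteq> {..<N}" "card J = m" "finite J" using finite_subset by auto
        have s: "(\<Sum>i\<in>insert 0 (Suc ` J). i) = (\<Sum>i\<in>J. i) + m"
          using J by (simp add: sum_Suc_image)
        have "isgn (int ((\<Sum>i\<in>J. i) + m + Suc m * (Suc m - 1) div 2)) a
            = isgn (int ((\<Sum>i\<in>J. i) + m * (m - 1) div 2)) a" for a :: 'b
          by (rule isgn_cong2) (simp only: tri_nat, simp)
        then show "S (insert 0 (Suc ` J)) = isgn (int ((\<Sum>i\<in>J. i) + m * (m - 1) div 2)) (F (ix x \<phi> (nths xs J)) (nths xs ({..<N} - J)))"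
          unfolding S_def s Suc by (simp add: nths_insert0 nths_compl_insert0 ix_def)
      qed
      also have "\<dots> = shuffle_ext (p - 1) q (ix x \<phi>) F xs"
        using True Suc by (simp add: shuffle_ext_def N_def)
      finally show ?thesis .
    qed
    also have "sum S {I. (I \<subseteq> {..<Suc N} \<and> card I = p) \<and> 0 \<notin> I}
        = isgn (int p) (shuffle_ext p (q - 1) \<phi> (\<lambda>v. ix x (F v)) xs)"
    proof -
      have eq: "{I. (I \<subseteq> {..<Suc N} \<and> card I = p) \<and> 0 \<notin> I} = {I. I \<subseteq> {..<Suc N} \<and> card I = p \<and> 0 \<notin> I}"
        by auto
      have "sum S {I. (I \<subseteq> {..<Suc N} \<and> card I = p) \<and> 0 \<notin> I}
          = (\<Sum>J\<in>{J. J \<subseteq> {..<N} \<and> card J = p}. S (Suc ` J))"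
        unfolding eq by (rule sum.reindex_bij_betw[OF bij_Suc_img, symmetric])
      also have "\<dots> = (\<Sum>J\<in>{J. J \<subseteq> {..<N} \<and> card J = p}.
           isgn (int p) (isgn (int ((\<Sum>i\<in>J. i) + p * (p - 1) div 2)) (ix x (F (\<phi> (nths xs J))) (nths xs ({..<N} - J)))))"
      proof (rule sum.cong[OF refl])
        fix J assume "J \<in> {J. J \<subseteq> {..<N} \<and> card J = p}"
        then have J: "J \<subseteq> {..<N}" "card J = p" "finite J" using finite_subset by auto
        have s: "(\<Sum>i\<in>Suc ` J. i) = (\<Sum>i\<in>J. i) + p"
          using J by (simp add: sum_Suc_image)
        show "S (Suc ` J) = isgn (int p) (isgn (int ((\<Sum>i\<in>J. i) + p * (p - 1) div 2)) (ix x (F (\<phi> (nths xs J))) (nths xs ({..<N} - J))))"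
          unfolding S_def s by (simp add: nths_Suc_image nths_compl_Suc ix_def isgn_isgn add_ac)
      qed
      also have "\<dots> = isgn (int p) (shuffle_ext p (q - 1) \<phi> (\<lambda>v. ix x (F v)) xs)"
      proof (cases q)
        case 0
        have E: "{J. J \<subseteq> {..<N} \<and> card J = p} = {}"
        proof -
          { fix J assume J: "J \<subseteq> {..<N}" "card J = p"
            then have "card J \<le> N" using card_mono[OF finite_lessThan J(1)] by simp
            then have False using J True 0 by simp }
          then show ?thesis by auto
        qed
        show ?thesis unfolding E using T2z[OF 0] by simp
      next
        case (Suc r)
        then show ?thesis using True by (simp add: shuffle_ext_def N_def isgn_sum)
      qed
      finally show ?thesis .
    qed
    finally show ?thesis .
  qed
qed


definition addW :: "'a::ab_group_add set \<Rightarrow> ('a \<Rightarrow> 'g list \<Rightarrow> 'b::ab_group_add) \<Rightarrow> bool" where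
  "addW W G \<longleftrightarrow> (\<forall>v\<in>W. \<forall>w\<in>W. G (v + w) = (\<lambda>ys. G v ys + G w ys))"

definition grp :: "'a::ab_group_add set \<Rightarrow> bool" where
  "grp W \<longleftrightarrow> 0 \<in> W \<and> (\<forall>a\<in>W. \<forall>b\<in>W. a + b \<in> W \<and> a - b \<in> W \<and> - a \<in> W)"

lemma addW_0: "addW W G \<Longrightarrow> 0 \<in> W \<Longrightarrow> G 0 ys = 0"
  unfolding addW_def by (metis add.right_neutral add_cancel_right_right)

lemma addW_add: "addW W G \<Longrightarrow> v \<in> W \<Longrightarrow> w \<in> W \<Longrightarrow> G (v + w) ys = G v ys + G w ys"
  unfolding addW_def by metis

lemma addW_diff: "addW W G \<Longrightarrow> grp W \<Longrightarrow> v \<in> W \<Longrightarrow> w \<in> W \<Longrightarrow> G (v - w) ys = G v ys - G w ys"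
proof -
  assume a: "addW W G" "grp W" "v \<in> W" "w \<in> W"
  then have "v - w \<in> W" by (simp add: grp_def)
  then have "G (v - w + w) ys = G (v - w) ys + G w ys" using addW_add[OF a(1)] a by blast
  then show ?thesis by (simp add: algebra_simps)
qed

lemma addW_isgn: "addW W G \<Longrightarrow> grp W \<Longrightarrow> v \<in> W \<Longrightarrow> G (isgn k v) ys = isgn k (G v ys)"
  using addW_diff[of W G 0 v ys] addW_0[of W G ys] by (auto simp: isgn_def grp_def)

lemma grp_isgn: "grp W \<Longrightarrow> v \<in> W \<Longrightarrow> isgn k v \<in> W"
  by (simp add: isgn_def grp_def)

lemma shuffle_Nil: "shuffle_ext p q \<phi> F [] = (if p = 0 \<and> q = 0 then F (\<phi> []) [] else 0)"
proof -
  have "{I. I \<subseteq> {..<0::nat} \<and> card I = 0} = {{}}" by auto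
  then show ?thesis by (auto simp: shuffle_ext_def)
qed

lemma shuffle_add1:
  assumes "addW W G" "\<And>ys. \<phi>1 ys \<in> W" "\<And>ys. \<phi>2 ys \<in> W"
  shows "shuffle_ext p q (\<lambda>ys. \<phi>1 ys + \<phi>2 ys) G xs = shuffle_ext p q \<phi>1 G xs + shuffle_ext p q \<phi>2 G xs"
  using assms by (simp add: shuffle_ext_def addW_add isgn_add sum.distrib)

lemma shuffle_diff1:
  assumes "addW W G" "grp W" "\<And>ys. \<phi>1 ys \<in> W" "\<And>ys. \<phi>2 ys \<in> W"
  shows "shuffle_ext p q (\<lambda>ys. \<phi>1 ys - \<phi>2 ys) G xs = shuffle_ext p q \<phi>1 G xs - shuffle_ext p q \<phi>2 G xs"
  using assms by (simp add: shuffle_ext_def addW_diff isgn_diff sum_subtractf)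

lemma shuffle_isgn1:
  assumes "addW W G" "grp W" "\<And>ys. \<phi> ys \<in> W"
  shows "shuffle_ext p q (\<lambda>ys. isgn k (\<phi> ys)) G xs = isgn k (shuffle_ext p q \<phi> G xs)"
  using assms by (simp add: shuffle_ext_def addW_isgn isgn_isgn isgn_sum add.commute)

lemma shuffle_add2:
  "shuffle_ext p q \<phi> (\<lambda>v ys. G1 v ys + G2 v ys) xs = shuffle_ext p q \<phi> G1 xs + shuffle_ext p q \<phi> G2 xs"
  by (simp add: shuffle_ext_def isgn_add sum.distrib)

lemma shuffle_diff2:
  "shuffle_ext p q \<phi> (\<lambda>v ys. G1 v ys - G2 v ys) xs = shuffle_ext p q \<phi> G1 xs - shuffle_ext p q \<phi> G2 xs"
  by (simp add: shuffle_ext_def isgn_diff sum_subtractf)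

lemma shuffle_isgn2:
  "shuffle_ext p q \<phi> (\<lambda>v ys. isgn k (G v ys)) xs = isgn k (shuffle_ext p q \<phi> G xs)"
  by (simp add: shuffle_ext_def isgn_isgn isgn_sum add.commute)

lemma shuffle_cong:
  "(\<And>ys. \<phi>1 ys = \<phi>2 ys) \<Longrightarrow> (\<And>v ys. v \<in> range \<phi>1 \<Longrightarrow> G1 v ys = G2 v ys) \<Longrightarrow>
    shuffle_ext p q \<phi>1 G1 xs = shuffle_ext p q \<phi>2 G2 xs"
  by (simp add: shuffle_ext_def)

definition addF :: "('g \<Rightarrow> 'b \<Rightarrow> 'b::ab_group_add) \<Rightarrow> bool" where
  "addF act \<longleftrightarrow> (\<forall>x a b. act x (a + b) = act x a + act x b)"

lemma addF_0: "addF act \<Longrightarrow> act x 0 = 0"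
  unfolding addF_def by (metis add_cancel_right_right add_0)

lemma addF_minus: "addF act \<Longrightarrow> act x (- a) = - act x a"
  unfolding addF_def by (metis add.right_inverse add_eq_0_iff addF_0[unfolded addF_def])

lemma addF_diff: "addF act \<Longrightarrow> act x (a - b) = act x a - act x b"
  using addF_minus[of act x b] unfolding addF_def by (metis diff_conv_add_uminus)

lemma addF_isgn: "addF act \<Longrightarrow> act x (isgn k a) = isgn k (act x a)"
  by (simp add: isgn_def addF_minus)

lemma addF_add: "addF act \<Longrightarrow> act x (a + b) = act x a + act x b"
  unfolding addF_def by blast

lemma ce_diff_add:
  assumes "addF act"
  shows "ce_diff br act (\<lambda>ys. \<psi>1 ys + \<psi>2 ys) xs = ce_diff br act \<psi>1 xs + ce_diff br act \<psi>2 xs"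
  using assms by (simp add: ce_diff_def addF_add isgn_add sum.distrib algebra_simps)

lemma ce_diff_diff:
  assumes "addF act"
  shows "ce_diff br act (\<lambda>ys. \<psi>1 ys - \<psi>2 ys) xs = ce_diff br act \<psi>1 xs - ce_diff br act \<psi>2 xs"
  using assms by (simp add: ce_diff_def addF_diff isgn_diff sum_subtractf algebra_simps)

lemma ce_diff_isgn:
  assumes "addF act"
  shows "ce_diff br act (\<lambda>ys. isgn k (\<psi> ys)) xs = isgn k (ce_diff br act \<psi> xs)"
  using assms by (simp add: ce_diff_def addF_isgn isgn_isgn isgn_add isgn_sum add.commute)

lemma lie_add:
  assumes "addF act"
  shows "lie br act x (\<lambda>ys. \<psi>1 ys + \<psi>2 ys) xs = lie br act x \<psi>1 xs + lie br act x \<psi>2 xs"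
  using assms by (simp add: lie_def addF_add sum.distrib algebra_simps)

lemma lie_diff:
  assumes "addF act"
  shows "lie br act x (\<lambda>ys. \<psi>1 ys - \<psi>2 ys) xs = lie br act x \<psi>1 xs - lie br act x \<psi>2 xs"
  using assms by (simp add: lie_def addF_diff sum_subtractf algebra_simps)

lemma lie_isgn:
  assumes "addF act"
  shows "lie br act x (\<lambda>ys. isgn k (\<psi> ys)) xs = isgn k (lie br act x \<psi> xs)"
  using assms by (simp add: lie_def addF_isgn isgn_diff isgn_sum)

lemma lie_Cons: "lie br act x \<psi> (y # ys) = lie br act x (ix y \<psi>) ys - ix (br x y) \<psi> ys"
  by (simp add: lie_def ix_def sum.lessThan_Suc_shift del: sum.lessThan_Suc)


lemma grp_sum: "grp W \<Longrightarrow> (\<And>i. f i \<in> W) \<Longrightarrow> sum f A \<in> W"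
  by (induct A rule: infinite_finite_induct) (auto simp: grp_def)

lemma lie_in_W:
  assumes "grp W" "\<And>x v. v \<in> W \<Longrightarrow> act x v \<in> W" "\<And>ys. \<phi> ys \<in> W"
  shows "lie brk act x \<phi> ys \<in> W"
proof -
  have "(\<Sum>i<length ys. \<phi> (ys[i := brk x (ys ! i)])) \<in> W" by (rule grp_sum) (use assms in auto)
  then show ?thesis using assms unfolding lie_def grp_def by auto
qed

lemma lie_shuffle:
  fixes \<phi> :: "'g::ab_group_add list \<Rightarrow> 'a::ab_group_add" and G :: "'a \<Rightarrow> 'g list \<Rightarrow> 'b::ab_group_add"
  assumes actB: "addF actB"
    and W: "grp W" and actW: "\<And>x v. v \<in> W \<Longrightarrow> act x v \<in> W" and act0: "\<And>x. act x 0 = 0"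
    and \<phi>0: "\<And>ys. length ys \<noteq> p \<Longrightarrow> \<phi> ys = 0" and \<phi>W: "\<And>ys. \<phi> ys \<in> W"
    and G0: "\<And>v ys. length ys \<noteq> s \<Longrightarrow> G v ys = 0" and GW: "addW W G"
  shows "lie brk actB x (shuffle_ext p s \<phi> G) ys
       = shuffle_ext p s (lie brk act x \<phi>) G ys
         + shuffle_ext p s \<phi> (\<lambda>v zs. lie brk actB x (G v) zs - G (act x v) zs) ys"
  using \<phi>0 \<phi>W G0 GW
proof (induct ys arbitrary: p s \<phi> G)
  case Nil
  have "0 \<in> W" using W by (simp add: grp_def)
  then show ?case using Nil addF_0[OF actB] by (simp add: lie_def shuffle_Nil addW_add)
next
  case (Cons y ys)
  note \<phi>0 = Cons.prems(1) and \<phi>W = Cons.prems(2) and G0 = Cons.prems(3) and GW = Cons.prems(4)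
  have zW: "0 \<in> W" using W by (simp add: grp_def)
  have Gz: "\<And>zs. G 0 zs = 0" using addW_0[OF GW zW] .
  define LG where "LG = (\<lambda>v zs. lie brk actB x (G v) zs - G (act x v) zs)"
  define T1 where "T1 = shuffle_ext (p - 1) s (ix y \<phi>) G"
  define T2 where "T2 = shuffle_ext p (s - 1) \<phi> (\<lambda>v. ix y (G v))"
  define C1 where "C1 = shuffle_ext (p - 1) s (ix (brk x y) \<phi>) G ys"
  define C2 where "C2 = shuffle_ext p (s - 1) \<phi> (\<lambda>v. ix (brk x y) (G v)) ys"
  define LG' where "LG' = (\<lambda>v zs. lie brk actB x (ix y (G v)) zs - ix y (G (act x v)) zs)"
  have S: "\<And>z zs. shuffle_ext p s \<phi> G (z # zs) = shuffle_ext (p - 1) s (ix z \<phi>) G zs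
           + isgn (int p) (shuffle_ext p (s - 1) \<phi> (\<lambda>v. ix z (G v)) zs)"
    by (rule shuffle_Cons) (use \<phi>0 G0 Gz in auto)
  have ixpsi: "ix y (shuffle_ext p s \<phi> G) = (\<lambda>zs. T1 zs + isgn (int p) (T2 zs))"
    by (rule ext) (simp add: ix_def S T1_def T2_def)
  have ix\<phi>0: "\<And>zs. length zs \<noteq> p - 1 \<Longrightarrow> ix z \<phi> zs = 0" for z
    using \<phi>0 by (cases p) (auto simp: ix_def)
  have ixG0: "\<And>v zs. length zs \<noteq> s - 1 \<Longrightarrow> ix z (G v) zs = 0" for z
    using G0 by (cases s) (auto simp: ix_def)
  have ixGW: "addW W (\<lambda>v. ix z (G v))" for z
    using GW by (simp add: addW_def ix_def)
  have IH1: "lie brk actB x T1 ys = shuffle_ext (p - 1) s (lie brk act x (ix y \<phi>)) G ys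
      + shuffle_ext (p - 1) s (ix y \<phi>) LG ys"
    unfolding T1_def LG_def by (rule Cons.hyps) (use ix\<phi>0 \<phi>W G0 GW in \<open>auto simp: ix_def\<close>)
  have IH2: "lie brk actB x T2 ys = shuffle_ext p (s - 1) (lie brk act x \<phi>) (\<lambda>v. ix y (G v)) ys
      + shuffle_ext p (s - 1) \<phi> LG' ys"
    unfolding T2_def LG'_def by (rule Cons.hyps) (use \<phi>0 \<phi>W ixG0 ixGW in auto)
  have L: "lie brk actB x (shuffle_ext p s \<phi> G) (y # ys)
      = lie brk actB x T1 ys + isgn (int p) (lie brk actB x T2 ys) - (C1 + isgn (int p) C2)"
  proof -
    have c: "ix (brk x y) (shuffle_ext p s \<phi> G) ys = C1 + isgn (int p) C2"
      unfolding C1_def C2_def using S[of "brk x y" ys] by (simp add: ix_def)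
    show ?thesis
      unfolding lie_Cons ixpsi lie_add[OF actB] lie_isgn[OF actB] c ..
  qed
  have lie\<phi>W: "\<And>zs. lie brk act x \<phi> zs \<in> W" by (rule lie_in_W[OF W actW \<phi>W])
  have lie\<phi>0: "\<And>zs. length zs \<noteq> p \<Longrightarrow> lie brk act x \<phi> zs = 0"
    using \<phi>0 act0 by (simp add: lie_def)
  have R1a: "shuffle_ext p s (lie brk act x \<phi>) G (y # ys)
      = shuffle_ext (p - 1) s (ix y (lie brk act x \<phi>)) G ys
        + isgn (int p) (shuffle_ext p (s - 1) (lie brk act x \<phi>) (\<lambda>v. ix y (G v)) ys)"
    by (rule shuffle_Cons) (use lie\<phi>0 G0 Gz in auto)
  have ixlie: "ix y (lie brk act x \<phi>) = (\<lambda>zs. lie brk act x (ix y \<phi>) zs - ix (brk x y) \<phi> zs)"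
    by (rule ext) (simp add: ix_def lie_Cons)
  have R1b: "shuffle_ext (p - 1) s (ix y (lie brk act x \<phi>)) G ys
      = shuffle_ext (p - 1) s (lie brk act x (ix y \<phi>)) G ys - C1"
    unfolding ixlie C1_def
  proof (rule shuffle_diff1[OF GW W])
    show "\<And>zs. lie brk act x (ix y \<phi>) zs \<in> W" by (rule lie_in_W[OF W actW]) (use Cons.prems(2) in \<open>auto simp: ix_def\<close>)
    show "\<And>zs. ix (brk x y) \<phi> zs \<in> W" by (simp add: ix_def \<phi>W)
  qed
  have LG0: "\<And>v zs. length zs \<noteq> s \<Longrightarrow> LG v zs = 0"
    using G0 addF_0[OF actB] by (simp add: LG_def lie_def)
  have LGz: "\<And>zs. LG 0 zs = 0"
    using Gz act0 addF_0[OF actB] by (simp add: LG_def lie_def)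
  have R2a: "shuffle_ext p s \<phi> LG (y # ys)
      = shuffle_ext (p - 1) s (ix y \<phi>) LG ys + isgn (int p) (shuffle_ext p (s - 1) \<phi> (\<lambda>v. ix y (LG v)) ys)"
    by (rule shuffle_Cons) (use \<phi>0 LG0 LGz in auto)
  have ixLG: "(\<lambda>v. ix y (LG v)) = (\<lambda>v zs. LG' v zs - ix (brk x y) (G v) zs)"
    by (intro ext) (simp add: ix_def LG_def LG'_def lie_Cons)
  have R2b: "shuffle_ext p (s - 1) \<phi> (\<lambda>v. ix y (LG v)) ys = shuffle_ext p (s - 1) \<phi> LG' ys - C2"
    unfolding ixLG C2_def by (rule shuffle_diff2)
  show ?case
    unfolding L IH1 IH2 R1a R1b R2a R2b LG_def[symmetric]
    by (simp add: isgn_add isgn_diff algebra_simps)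
qed


lemma shuffle_neg1:
  assumes "addW W G" "grp W" "\<And>ys. \<phi> ys \<in> W"
  shows "shuffle_ext p q (\<lambda>ys. - \<phi> ys) G xs = - shuffle_ext p q \<phi> G xs"
  using shuffle_isgn1[OF assms, where k=1] by (simp add: isgn_def)

lemma shuffle_neg2:
  "shuffle_ext p q \<phi> (\<lambda>v ys. - G v ys) xs = - shuffle_ext p q \<phi> G xs"
  using shuffle_isgn2[where k=1] by (simp add: isgn_def)

lemma asym_shuffle:
  fixes \<phi> :: "'g::ab_group_add list \<Rightarrow> 'a::ab_group_add" and G :: "'a \<Rightarrow> 'g list \<Rightarrow> 'b::ab_group_add"
  assumes W: "grp W"
    and \<phi>0: "\<And>ys. length ys \<noteq> p \<Longrightarrow> \<phi> ys = 0" and \<phi>W: "\<And>ys. \<phi> ys \<in> W" and \<phi>a: "asym \<phi>"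
    and G0: "\<And>v ys. length ys \<noteq> s \<Longrightarrow> G v ys = 0" and GW: "addW W G" and Ga: "\<And>v. asym (G v)"
  shows "asym (shuffle_ext p s \<phi> G)"
  unfolding asym_def
proof (intro allI)
  fix as x y bs
  show "shuffle_ext p s \<phi> G (as @ x # y # bs) = - shuffle_ext p s \<phi> G (as @ y # x # bs)"
    using \<phi>0 \<phi>W \<phi>a G0 GW Ga
  proof (induct as arbitrary: p s \<phi> G)
    case Nil
    note \<phi>0 = Nil.prems(1) and \<phi>W = Nil.prems(2) and \<phi>a = Nil.prems(3)
      and G0 = Nil.prems(4) and GW = Nil.prems(5) and Ga = Nil.prems(6)
    have zW: "0 \<in> W" using W by (simp add: grp_def)
    have Gz: "\<And>zs. G 0 zs = 0" using addW_0[OF GW zW] .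
    have ix\<phi>0: "\<And>zs. length zs \<noteq> p - 1 \<Longrightarrow> ix z \<phi> zs = 0" for z
      using \<phi>0 by (cases p) (auto simp: ix_def)
    have ixG0: "\<And>v zs. length zs \<noteq> s - 1 \<Longrightarrow> ix z (G v) zs = 0" for z
      using G0 by (cases s) (auto simp: ix_def)
    define A where "A = (\<lambda>x y. shuffle_ext (p - 1 - 1) s (ix y (ix x \<phi>)) G bs)"
    define B where "B = (\<lambda>x y. shuffle_ext (p - 1) (s - 1) (ix x \<phi>) (\<lambda>v. ix y (G v)) bs)"
    define D where "D = (\<lambda>x y. shuffle_ext p (s - 1 - 1) \<phi> (\<lambda>v. ix y (ix x (G v))) bs)"
    have E: "shuffle_ext p s \<phi> G (x # y # bs) = A x y + isgn (int (p - 1)) (B x y) + isgn (int p) (B y x + isgn (int p) (D x y))"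
      for x y
    proof -
      have "shuffle_ext p s \<phi> G (x # y # bs) = shuffle_ext (p - 1) s (ix x \<phi>) G (y # bs)
           + isgn (int p) (shuffle_ext p (s - 1) \<phi> (\<lambda>v. ix x (G v)) (y # bs))"
        by (rule shuffle_Cons) (use \<phi>0 G0 Gz in auto)
      also have "shuffle_ext (p - 1) s (ix x \<phi>) G (y # bs) = A x y + isgn (int (p - 1)) (B x y)"
        unfolding A_def B_def by (rule shuffle_Cons) (use ix\<phi>0 G0 Gz in auto)
      also have "shuffle_ext p (s - 1) \<phi> (\<lambda>v. ix x (G v)) (y # bs) = B y x + isgn (int p) (D x y)"
        unfolding B_def D_def by (rule shuffle_Cons) (use \<phi>0 ixG0 Gz in \<open>auto simp: ix_def\<close>)
      finally show ?thesis .
    qed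
    have Aa: "A x y = - A y x"
    proof -
      have "ix y (ix x \<phi>) = (\<lambda>zs. - ix x (ix y \<phi>) zs)"
        by (rule ext) (simp add: ix_def asym_swap[OF \<phi>a, of x y])
      then show ?thesis unfolding A_def
        by (simp add: shuffle_neg1[OF GW W] ix_def \<phi>W)
    qed
    have Da: "D x y = - D y x"
    proof -
      have "(\<lambda>v. ix y (ix x (G v))) = (\<lambda>v zs. - ix x (ix y (G v)) zs)"
        by (intro ext) (simp add: ix_def asym_swap[OF Ga, of _ x y])
      then show ?thesis unfolding D_def by (simp add: shuffle_neg2)
    qed
    have Bc: "isgn (int (p - 1)) (B x y) + isgn (int p) (B y x) = - (isgn (int (p - 1)) (B y x) + isgn (int p) (B x y))"
    proof (cases p)
      case 0
      have "B u w = 0" for u w unfolding B_def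
        by (rule shuffle_zero1) (use 0 \<phi>0 Gz in \<open>auto simp: ix_def\<close>)
      then show ?thesis by simp
    next
      case (Suc m)
      then show ?thesis by (simp add: isgn_def)
    qed
    have ii: "\<And>z::'b. isgn (int p) (isgn (int p) z) = z" by (simp add: isgn_def)
    have e1: "shuffle_ext p s \<phi> G (x # y # bs) = A x y + D x y + (isgn (int (p - 1)) (B x y) + isgn (int p) (B y x))"
      using E[of x y] by (simp add: isgn_add ii algebra_simps)
    have e2: "shuffle_ext p s \<phi> G (y # x # bs) = A y x + D y x + (isgn (int (p - 1)) (B y x) + isgn (int p) (B x y))"
      using E[of y x] by (simp add: isgn_add ii algebra_simps)
    have "shuffle_ext p s \<phi> G (x # y # bs) = - shuffle_ext p s \<phi> G (y # x # bs)"
      unfolding e1 e2 Aa Da Bc by (simp add: algebra_simps)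
    then show ?case by simp
  next
    case (Cons a as)
    note \<phi>0 = Cons.prems(1) and \<phi>W = Cons.prems(2) and \<phi>a = Cons.prems(3)
      and G0 = Cons.prems(4) and GW = Cons.prems(5) and Ga = Cons.prems(6)
    have zW: "0 \<in> W" using W by (simp add: grp_def)
    have Gz: "\<And>zs. G 0 zs = 0" using addW_0[OF GW zW] .
    have S: "\<And>zs. shuffle_ext p s \<phi> G (a # zs) = shuffle_ext (p - 1) s (ix a \<phi>) G zs
           + isgn (int p) (shuffle_ext p (s - 1) \<phi> (\<lambda>v. ix a (G v)) zs)"
      by (rule shuffle_Cons) (use \<phi>0 G0 Gz in auto)
    have ix\<phi>0: "\<And>zs. length zs \<noteq> p - 1 \<Longrightarrow> ix a \<phi> zs = 0"
      using \<phi>0 by (cases p) (auto simp: ix_def)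
    have ixG0: "\<And>v zs. length zs \<noteq> s - 1 \<Longrightarrow> ix a (G v) zs = 0"
      using G0 by (cases s) (auto simp: ix_def)
    have ixGW: "addW W (\<lambda>v. ix a (G v))"
      using GW by (simp add: addW_def ix_def)
    have IH1: "shuffle_ext (p - 1) s (ix a \<phi>) G (as @ x # y # bs) = - shuffle_ext (p - 1) s (ix a \<phi>) G (as @ y # x # bs)"
      by (rule Cons.hyps) (use ix\<phi>0 \<phi>W asym_ix[OF \<phi>a] G0 GW Ga in \<open>auto simp: ix_def\<close>)
    have IH2: "shuffle_ext p (s - 1) \<phi> (\<lambda>v. ix a (G v)) (as @ x # y # bs) = - shuffle_ext p (s - 1) \<phi> (\<lambda>v. ix a (G v)) (as @ y # x # bs)"
      by (rule Cons.hyps) (use \<phi>0 \<phi>W \<phi>a ixG0 ixGW asym_ix[OF Ga] in auto)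
    show ?case using IH1 IH2 by (simp add: S isgn_minus)
  qed
qed


definition homact :: "('g \<Rightarrow> 'b \<Rightarrow> 'b::ab_group_add) \<Rightarrow> ('g \<Rightarrow> 'a \<Rightarrow> 'a) \<Rightarrow> 'g \<Rightarrow> ('a \<Rightarrow> 'b) \<Rightarrow> 'a \<Rightarrow> 'b" where
  "homact actB act x c = (\<lambda>v. actB x (c v) - c (act x v))"

definition dG :: "('g::ab_group_add \<Rightarrow> 'g \<Rightarrow> 'g) \<Rightarrow> ('g \<Rightarrow> 'b \<Rightarrow> 'b::ab_group_add) \<Rightarrow> ('g \<Rightarrow> 'a \<Rightarrow> 'a)
    \<Rightarrow> ('a \<Rightarrow> 'g list \<Rightarrow> 'b) \<Rightarrow> 'a \<Rightarrow> 'g list \<Rightarrow> 'b" where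
  "dG brk actB act G = (\<lambda>v ys. ce_diff brk (homact actB act) (\<lambda>zs w. G w zs) ys v)"

lemma ce_diff_Nil: "ce_diff brk act \<psi> [] = 0"
  by (simp add: ce_diff_def)

lemma ce_diff_zero: "(\<And>x. act x 0 = 0) \<Longrightarrow> ce_diff brk act (\<lambda>_. 0) xs = 0"
  by (simp add: ce_diff_def)

lemma ce_diff_in_W:
  assumes "grp W" "\<And>x v. v \<in> W \<Longrightarrow> act x v \<in> W" "\<And>ys. \<phi> ys \<in> W"
  shows "ce_diff brk act \<phi> ys \<in> W"
proof -
  have a: "(\<Sum>i<length ys. isgn (int i) (act (ys ! i) (\<phi> (del i ys)))) \<in> W"
    by (intro grp_sum grp_isgn) (use assms in auto)
  have b: "(\<Sum>j<length ys. \<Sum>i<j. isgn (int (i + j)) (\<phi> (brk (ys ! i) (ys ! j) # del i (del j ys)))) \<in> W"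
    by (intro grp_sum grp_isgn) (use assms in auto)
  show ?thesis using a b assms(1) unfolding ce_diff_def grp_def by auto
qed

lemma ce_diff_vanish:
  assumes "\<And>x. act x 0 = 0" "\<And>ys. length ys \<noteq> p \<Longrightarrow> \<phi> ys = 0" "length xs \<noteq> Suc p"
  shows "ce_diff brk act \<phi> xs = 0"
proof -
  have a: "\<phi> (del i xs) = 0" if "i < length xs" for i
    by (rule assms(2)) (use assms(3) that in simp)
  have b: "\<phi> (brk (xs ! i) (xs ! j) # del i (del j xs)) = 0" if "i < j" "j < length xs" for i j
    by (rule assms(2)) (use assms(3) that in auto)
  have "(\<Sum>i<length xs. isgn (int i) (act (xs ! i) (\<phi> (del i xs)))) = 0"
    by (rule sum.neutral) (simp add: a assms(1))
  moreover have "(\<Sum>j<length xs. \<Sum>i<j. isgn (int (i + j)) (\<phi> (brk (xs ! i) (xs ! j) # del i (del j xs)))) = 0"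
    by (intro sum.neutral ballI) (simp add: b)
  ultimately show ?thesis by (simp add: ce_diff_def)
qed

lemma asym_hat: "(\<And>v. asym (G v)) \<Longrightarrow> asym (\<lambda>zs v. G v zs)"
proof -
  assume a: "\<And>v. asym (G v)"
  show ?thesis unfolding asym_def
  proof (intro allI ext)
    fix as x y bs v
    show "G v (as @ x # y # bs) = (- (\<lambda>v. G v (as @ y # x # bs))) v"
      by (simp only: uminus_apply) (rule a[of v, unfolded asym_def, rule_format])
  qed
qed

lemma dG_0:
  assumes "addF actB" "\<And>x. act x 0 = 0" "\<And>ys. G 0 ys = 0"
  shows "dG brk actB act G 0 ys = 0"
  using assms by (simp add: dG_def ce_diff_def homact_def sum_fun_apply isgn_fun_apply addF_0)

lemma dG_vanish:
  assumes "addF actB" "\<And>v ys. length ys \<noteq> s \<Longrightarrow> G v ys = 0" "length ys \<noteq> Suc s"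
  shows "dG brk actB act G v ys = 0"
proof -
  have "ce_diff brk (homact actB act) (\<lambda>zs w. G w zs) ys = 0"
    by (rule ce_diff_vanish) (use assms in \<open>auto simp: homact_def addF_0 fun_eq_iff\<close>)
  then show ?thesis by (simp add: dG_def)
qed

lemma leibniz:
  fixes \<phi> :: "'g::ab_group_add list \<Rightarrow> 'a::ab_group_add" and G :: "'a \<Rightarrow> 'g list \<Rightarrow> 'b::ab_group_add"
  assumes actB: "addF actB"
    and W: "grp W" and actW: "\<And>x v. v \<in> W \<Longrightarrow> act x v \<in> W" and act0: "\<And>x. act x 0 = 0"
    and \<phi>0: "\<And>ys. length ys \<noteq> p \<Longrightarrow> \<phi> ys = 0" and \<phi>W: "\<And>ys. \<phi> ys \<in> W" and \<phi>a: "asym \<phi>"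
    and G0: "\<And>v ys. length ys \<noteq> s \<Longrightarrow> G v ys = 0" and GW: "addW W G" and Ga: "\<And>v. asym (G v)"
  shows "ce_diff brk actB (shuffle_ext p s \<phi> G) xs
       = shuffle_ext (Suc p) s (ce_diff brk act \<phi>) G xs
         + isgn (int p) (shuffle_ext p (Suc s) \<phi> (dG brk actB act G) xs)"
  using \<phi>0 \<phi>W \<phi>a G0 GW Ga
proof (induct xs arbitrary: p s \<phi> G)
  case Nil
  then show ?case by (simp add: ce_diff_Nil shuffle_Nil)
next
  case (Cons x xs)
  note \<phi>0 = Cons.prems(1) and \<phi>W = Cons.prems(2) and \<phi>a = Cons.prems(3)
    and G0 = Cons.prems(4) and GW = Cons.prems(5) and Ga = Cons.prems(6)
  have zW: "0 \<in> W" using W by (simp add: grp_def)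
  have Gz: "\<And>zs. G 0 zs = 0" using addW_0[OF GW zW] .
  define \<psi> where "\<psi> = shuffle_ext p s \<phi> G"
  define LG where "LG = (\<lambda>v zs. lie brk actB x (G v) zs - G (act x v) zs)"
  define T1 where "T1 = shuffle_ext (p - 1) s (ix x \<phi>) G"
  define T2 where "T2 = shuffle_ext p (s - 1) \<phi> (\<lambda>v. ix x (G v))"
  define dG1 where "dG1 = dG brk actB act G"
  define dG2 where "dG2 = dG brk actB act (\<lambda>v. ix x (G v))"
  have ix\<phi>0: "\<And>zs. length zs \<noteq> p - 1 \<Longrightarrow> ix x \<phi> zs = 0"
    using \<phi>0 by (cases p) (auto simp: ix_def)
  have ixG0: "\<And>v zs. length zs \<noteq> s - 1 \<Longrightarrow> ix x (G v) zs = 0"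
    using G0 by (cases s) (auto simp: ix_def)
  have ixGW: "addW W (\<lambda>v. ix x (G v))"
    using GW by (simp add: addW_def ix_def)
  have ix\<phi>W: "\<And>zs. ix x \<phi> zs \<in> W" using \<phi>W by (simp add: ix_def)
  have d\<phi>W: "\<And>zs. ce_diff brk act \<phi> zs \<in> W" by (rule ce_diff_in_W[OF W actW \<phi>W])
  have dix\<phi>W: "\<And>zs. ce_diff brk act (ix x \<phi>) zs \<in> W" by (rule ce_diff_in_W[OF W actW ix\<phi>W])
  have lie\<phi>W: "\<And>zs. lie brk act x \<phi> zs \<in> W" by (rule lie_in_W[OF W actW \<phi>W])
  have d\<phi>0: "\<And>zs. length zs \<noteq> Suc p \<Longrightarrow> ce_diff brk act \<phi> zs = 0"
    by (rule ce_diff_vanish) (use \<phi>0 act0 in auto)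
  have asym\<psi>: "asym \<psi>" unfolding \<psi>_def by (rule asym_shuffle[OF W \<phi>0 \<phi>W \<phi>a G0 GW Ga])
  have ixpsi: "ix x \<psi> = (\<lambda>zs. T1 zs + isgn (int p) (T2 zs))"
  proof
    fix zs
    have "ix x \<psi> zs = shuffle_ext p s \<phi> G (x # zs)" by (simp add: ix_def \<psi>_def)
    also have "\<dots> = T1 zs + isgn (int p) (T2 zs)"
      unfolding T1_def T2_def by (rule shuffle_Cons) (use \<phi>0 G0 Gz in auto)
    finally show "ix x \<psi> zs = T1 zs + isgn (int p) (T2 zs)" .
  qed
  have L1: "ce_diff brk actB \<psi> (x # xs) = lie brk actB x \<psi> xs - ce_diff brk actB (ix x \<psi>) xs"
    by (rule cartan[OF asym\<psi>])
  have L2: "lie brk actB x \<psi> xs = shuffle_ext p s (lie brk act x \<phi>) G xs + shuffle_ext p s \<phi> LG xs"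
    unfolding \<psi>_def LG_def by (rule lie_shuffle[where act=act and W=W]) (use actB W actW act0 \<phi>0 \<phi>W G0 GW in auto)
  have L3: "ce_diff brk actB (ix x \<psi>) xs = ce_diff brk actB T1 xs + isgn (int p) (ce_diff brk actB T2 xs)"
    unfolding ixpsi ce_diff_add[OF actB] ce_diff_isgn[OF actB] ..
  have IH1: "ce_diff brk actB T1 xs = shuffle_ext (Suc (p - 1)) s (ce_diff brk act (ix x \<phi>)) G xs
      + isgn (int (p - 1)) (shuffle_ext (p - 1) (Suc s) (ix x \<phi>) dG1 xs)"
    unfolding T1_def dG1_def by (rule Cons.hyps) (use ix\<phi>0 ix\<phi>W asym_ix[OF \<phi>a] G0 GW Ga in auto)
  have IH2: "ce_diff brk actB T2 xs = shuffle_ext (Suc p) (s - 1) (ce_diff brk act \<phi>) (\<lambda>v. ix x (G v)) xs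
      + isgn (int p) (shuffle_ext p (Suc (s - 1)) \<phi> dG2 xs)"
    unfolding T2_def dG2_def by (rule Cons.hyps) (use \<phi>0 \<phi>W \<phi>a ixG0 ixGW asym_ix[OF Ga] in auto)
  have R1a: "shuffle_ext (Suc p) s (ce_diff brk act \<phi>) G (x # xs)
      = shuffle_ext p s (ix x (ce_diff brk act \<phi>)) G xs
        + isgn (int (Suc p)) (shuffle_ext (Suc p) (s - 1) (ce_diff brk act \<phi>) (\<lambda>v. ix x (G v)) xs)"
    using shuffle_Cons[of "Suc p" "ce_diff brk act \<phi>" s G x xs] d\<phi>0 G0 Gz by simp
  have ixd\<phi>: "ix x (ce_diff brk act \<phi>) = (\<lambda>zs. lie brk act x \<phi> zs - ce_diff brk act (ix x \<phi>) zs)"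
    by (rule ext) (simp add: ix_def[of x "ce_diff brk act \<phi>"] cartan[OF \<phi>a])
  have R1b: "shuffle_ext p s (ix x (ce_diff brk act \<phi>)) G xs
      = shuffle_ext p s (lie brk act x \<phi>) G xs - shuffle_ext p s (ce_diff brk act (ix x \<phi>)) G xs"
    unfolding ixd\<phi> by (rule shuffle_diff1[OF GW W lie\<phi>W dix\<phi>W])
  have dG1z: "\<And>zs. dG1 0 zs = 0" unfolding dG1_def by (rule dG_0) (use actB act0 Gz in auto)
  have dG10: "\<And>v zs. length zs \<noteq> Suc s \<Longrightarrow> dG1 v zs = 0" unfolding dG1_def by (rule dG_vanish) (use actB G0 in auto)
  have R2a: "shuffle_ext p (Suc s) \<phi> dG1 (x # xs)
      = shuffle_ext (p - 1) (Suc s) (ix x \<phi>) dG1 xs + isgn (int p) (shuffle_ext p s \<phi> (\<lambda>v. ix x (dG1 v)) xs)"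
    using shuffle_Cons[of p \<phi> "Suc s" dG1 x xs] \<phi>0 dG10 dG1z by simp
  have ixdG: "(\<lambda>v. ix x (dG1 v)) = (\<lambda>v zs. LG v zs - dG2 v zs)"
  proof (intro ext)
    fix v zs
    have "ce_diff brk (homact actB act) (\<lambda>zs w. G w zs) (x # zs)
        = lie brk (homact actB act) x (\<lambda>zs w. G w zs) zs - ce_diff brk (homact actB act) (ix x (\<lambda>zs w. G w zs)) zs"
      by (rule cartan[OF asym_hat[OF Ga]])
    moreover have "ix x (\<lambda>zs w. G w zs) = (\<lambda>zs w. ix x (G w) zs)" by (simp add: ix_def)
    moreover have "lie brk (homact actB act) x (\<lambda>zs w. G w zs) zs v = LG v zs"
      by (simp add: lie_def LG_def homact_def sum_fun_apply)
    ultimately show "ix x (dG1 v) zs = LG v zs - dG2 v zs"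
      by (simp add: dG1_def dG2_def dG_def ix_def)
  qed
  have R2b: "shuffle_ext p s \<phi> (\<lambda>v. ix x (dG1 v)) xs = shuffle_ext p s \<phi> LG xs - shuffle_ext p s \<phi> dG2 xs"
    unfolding ixdG by (rule shuffle_diff2)
  have F1: "shuffle_ext (Suc (p - 1)) s (ce_diff brk act (ix x \<phi>)) G xs = shuffle_ext p s (ce_diff brk act (ix x \<phi>)) G xs"
  proof (cases p)
    case 0
    have z: "ce_diff brk act (ix x \<phi>) = (\<lambda>_. 0)"
    proof
      fix zs
      have "ix x \<phi> = (\<lambda>_. 0)" using \<phi>0 0 by (auto simp: ix_def)
      then show "ce_diff brk act (ix x \<phi>) zs = 0" using ce_diff_zero[of act brk zs] act0 by simp
    qed
    show ?thesis unfolding z by (simp add: shuffle_zero1 Gz)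
  qed simp
  have F2: "isgn (int (p - 1)) (shuffle_ext (p - 1) (Suc s) (ix x \<phi>) dG1 xs)
       = - isgn (int p) (shuffle_ext (p - 1) (Suc s) (ix x \<phi>) dG1 xs)"
  proof (cases p)
    case 0
    have "ix x \<phi> = (\<lambda>_. 0)" using \<phi>0 0 by (auto simp: ix_def)
    then show ?thesis by (simp add: shuffle_zero1 dG1z)
  next
    case (Suc m) then show ?thesis by (simp add: isgn_def)
  qed
  have F3: "shuffle_ext p (Suc (s - 1)) \<phi> dG2 xs = shuffle_ext p s \<phi> dG2 xs"
  proof (cases s)
    case 0
    have "dG2 v zs = 0" for v zs
    proof -
      have "(\<lambda>v. ix x (G v)) = (\<lambda>_ _. 0)" using G0 0 by (auto simp: ix_def fun_eq_iff)
      then show ?thesis unfolding dG2_def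
        by (simp add: dG_def ce_diff_def homact_def sum_fun_apply isgn_fun_apply addF_0[OF actB] act0)
    qed
    then show ?thesis by (simp add: shuffle_zero2)
  qed simp
  have ii: "\<And>z::'b. isgn (int p) (isgn (int p) z) = z" by (simp add: isgn_def)
  show ?case
    unfolding \<psi>_def[symmetric] dG1_def[symmetric] L1 L2 L3 IH1 IH2 R1a R1b R2a R2b F1 F2 F3
    by (simp add: isgn_add isgn_diff isgn_minus ii isgn_Suc algebra_simps)
qed


lemma alt_vanish: "f \<in> alt_forms sg sw p S \<Longrightarrow> length ys \<noteq> p \<Longrightarrow> f ys = 0"
  by (simp add: alt_forms_def)

lemma alt_in: "f \<in> alt_forms sg sw p S \<Longrightarrow> 0 \<in> S \<Longrightarrow> f ys \<in> S"
  by (cases "length ys = p") (auto simp: alt_forms_def)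

lemma alt_zero: "0 \<in> S \<Longrightarrow> (\<And>c. sw c 0 = 0) \<Longrightarrow> (\<lambda>_. 0) \<in> alt_forms sg sw p S"
  by (simp add: alt_forms_def)

lemma alt_asym:
  fixes f :: "'g::ab_group_add list \<Rightarrow> 'w::ab_group_add"
  assumes f: "f \<in> alt_forms sg sw p S"
  shows "asym f"
  unfolding asym_def
proof (intro allI)
  fix as bs :: "'g list" and x y :: 'g
  let ?i = "length as"
  show "f (as @ x # y # bs) = - f (as @ y # x # bs)"
  proof (cases "length (as @ x # y # bs) = p")
    case False
    then show ?thesis using f by (simp add: alt_forms_def)
  next
    case True
    have add: "\<And>xs i a b. length xs = p \<Longrightarrow> i < p \<Longrightarrow> f (xs[i := a + b]) = f (xs[i := a]) + f (xs[i := b])"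
      using f by (simp add: alt_forms_def)
    have alt: "\<And>xs i j. length xs = p \<Longrightarrow> i < j \<Longrightarrow> j < p \<Longrightarrow> xs ! i = xs ! j \<Longrightarrow> f xs = 0"
      using f unfolding alt_forms_def by blast
    have eqz: "f (as @ a # a # bs) = 0" for a
      by (rule alt[of _ ?i "Suc ?i"]) (use True in \<open>auto simp: nth_append\<close>)
    have s1: "f (as @ (x + y) # (x + y) # bs) = f (as @ x # (x + y) # bs) + f (as @ y # (x + y) # bs)"
      using add[of "as @ (x + y) # (x + y) # bs" ?i x y] True by (simp add: list_update_append)
    have s2: "f (as @ a # (x + y) # bs) = f (as @ a # x # bs) + f (as @ a # y # bs)" for a
      using add[of "as @ a # (x + y) # bs" "Suc ?i" x y] True by (simp add: list_update_append)
    have "0 = f (as @ x # y # bs) + f (as @ y # x # bs)"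
      using s1 s2[of x] s2[of y] eqz[of "x + y"] eqz[of x] eqz[of y] by simp
    then show ?thesis by (simp add: eq_neg_iff_add_eq_0)
  qed
qed


locale LPc =
  fixes sg :: "'k::field \<Rightarrow> 'g::ab_group_add \<Rightarrow> 'g" and br :: "'g \<Rightarrow> 'g \<Rightarrow> 'g"
    and sv :: "'k \<Rightarrow> 'v::ab_group_add \<Rightarrow> 'v" and Vc :: "int \<Rightarrow> 'v set"
    and actV :: "int \<Rightarrow> 'g \<Rightarrow> 'v \<Rightarrow> 'v" and dV :: "int \<Rightarrow> 'v \<Rightarrow> 'v"
  assumes lie: "lie_algebra sg br" and dgm: "dg_module sg br sv Vc actV dV" and nn: "nonneg Vc"
begin

lemma brF: "addF br"
  using lie by (simp add: lie_algebra_def addF_def)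

lemma sg_mod: "module sg"
  using lie by (simp add: lie_algebra_def module_iff_vector_space)

lemma sg0[simp]: "sg c 0 = 0"
  using module.scale_zero_right[OF sg_mod] .

lemma sv_mod: "module sv"
  using dgm by (simp add: dg_module_def module_iff_vector_space)

lemma subV: "module.subspace sv (Vc n)"
  using dgm by (simp add: dg_module_def)

lemma grpV: "grp (Vc n)"
  using module.subspace_0[OF sv_mod subV] module.subspace_add[OF sv_mod subV]
    module.subspace_diff[OF sv_mod subV] module.subspace_neg[OF sv_mod subV]
  by (simp add: grp_def)

lemma zV[simp]: "0 \<in> Vc n"
  using grpV by (simp add: grp_def)

lemma actW: "v \<in> Vc n \<Longrightarrow> actV n x v \<in> Vc n"
  using dgm by (simp add: dg_module_def)

lemma act_add: "v \<in> Vc n \<Longrightarrow> w \<in> Vc n \<Longrightarrow> actV n x (v + w) = actV n x v + actV n x w"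
  using dgm by (simp add: dg_module_def lin_on_def)

lemma act0[simp]: "actV n x 0 = 0"
  using act_add[of 0 n 0 x] by simp

lemma dW: "v \<in> Vc n \<Longrightarrow> dV n v \<in> Vc (n + 1)"
  using dgm by (simp add: dg_module_def)

lemma d_add: "v \<in> Vc n \<Longrightarrow> w \<in> Vc n \<Longrightarrow> dV n (v + w) = dV n v + dV n w"
  using dgm by (simp add: dg_module_def lin_on_def)

lemma d0[simp]: "dV n 0 = 0"
  using d_add[of 0 n 0] by simp

lemma Vneg: "n < 0 \<Longrightarrow> Vc n = {0}"
  using nn by (simp add: nonneg_def)

definition gensp :: "nat \<Rightarrow> int \<Rightarrow> ('v \<Rightarrow> 'g list \<Rightarrow> 'g) \<Rightarrow> bool" where
  "gensp s q G \<longleftrightarrow> (\<forall>v. v \<notin> Vc q \<longrightarrow> G v = (\<lambda>_. 0)) \<and> (\<forall>v\<in>Vc q. G v \<in> alt_forms sg sg s UNIV)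
     \<and> lin_on sv (\<lambda>c F xs. sg c (F xs)) (Vc q) G"

lemma gensp_0: "gensp s q G \<Longrightarrow> G 0 = (\<lambda>_. 0)"
  unfolding gensp_def lin_on_def using zV[of q] by (metis add_cancel_right_right fun_eq_iff plus_fun_apply)

lemma gensp_vanish: "gensp s q G \<Longrightarrow> length ys \<noteq> s \<Longrightarrow> G v ys = 0"
  unfolding gensp_def by (cases "v \<in> Vc q") (auto simp: alt_forms_def)

lemma gensp_addW: "gensp s q G \<Longrightarrow> addW (Vc q) G"
  unfolding gensp_def lin_on_def addW_def by (auto simp: plus_fun_def)

lemma gensp_asym: "gensp s q G \<Longrightarrow> asym (G v)"
  unfolding gensp_def
proof -
  assume a: "(\<forall>v. v \<notin> Vc q \<longrightarrow> G v = (\<lambda>_. 0)) \<and> (\<forall>v\<in>Vc q. G v \<in> alt_forms sg sg s UNIV) \<and> lin_on sv (\<lambda>c F xs. sg c (F xs)) (Vc q) G"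
  show "asym (G v)"
  proof (cases "v \<in> Vc q")
    case True then show ?thesis using a alt_asym by blast
  next
    case False then show ?thesis using a by (simp add: asym_def)
  qed
qed

lemma leib_gen:
  assumes \<phi>: "\<phi> \<in> alt_forms sg sv p (Vc q)" and G: "gensp s q G"
  shows "ce_diff br br (shuffle_ext p s \<phi> G) xs
       = shuffle_ext (Suc p) s (ce_diff br (actV q) \<phi>) G xs
         + isgn (int p) (shuffle_ext p (Suc s) \<phi> (dG br br (actV q) G) xs)"
proof (rule leibniz[where W="Vc q"])
  show "addF br" by (rule brF)
  show "grp (Vc q)" by (rule grpV)
  show "\<And>x v. v \<in> Vc q \<Longrightarrow> actV q x v \<in> Vc q" by (rule actW)
  show "\<And>x. actV q x 0 = 0" by simp
  show "\<And>ys. length ys \<noteq> p \<Longrightarrow> \<phi> ys = 0" using alt_vanish[OF \<phi>] .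
  show "\<And>ys. \<phi> ys \<in> Vc q" using alt_in[OF \<phi>] by simp
  show "asym \<phi>" by (rule alt_asym[OF \<phi>])
  show "\<And>v ys. length ys \<noteq> s \<Longrightarrow> G v ys = 0" using gensp_vanish[OF G] .
  show "addW (Vc q) G" by (rule gensp_addW[OF G])
  show "\<And>v. asym (G v)" by (rule gensp_asym[OF G])
qed

lemma deg0_gensp: "\<alpha> \<in> deg0_gens sg sv Vc \<Longrightarrow> gensp (nat k) k (\<alpha> k)"
  by (simp add: deg0_gens_def gensp_def)

lemma degm1_gensp: "h \<in> degm1_gens sg sv Vc \<Longrightarrow> gensp (nat k - 1) k (h k)"
proof -
  assume a: "h \<in> degm1_gens sg sv Vc"
  have e: "nat (k - 1) = nat k - 1" by simp
  show ?thesis using a unfolding degm1_gens_def gensp_def e[symmetric] by blast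
qed

lemma deg0_neg: "\<alpha> \<in> deg0_gens sg sv Vc \<Longrightarrow> k < 0 \<Longrightarrow> \<alpha> k v = (\<lambda>_. 0)"
proof -
  assume a: "\<alpha> \<in> deg0_gens sg sv Vc" "k < 0"
  show ?thesis
  proof (cases "v \<in> Vc k")
    case True
    then have "v = 0" using Vneg[OF a(2)] by simp
    then show ?thesis using gensp_0[OF deg0_gensp[OF a(1)]] by simp
  next
    case False then show ?thesis using a(1) by (simp add: deg0_gens_def)
  qed
qed

lemma degm1_nonpos: "h \<in> degm1_gens sg sv Vc \<Longrightarrow> k \<le> 0 \<Longrightarrow> h k v = (\<lambda>_. 0)"
  by (simp add: degm1_gens_def)

end


lemma sum_top_int:
  fixes n :: int
  assumes "g (n + 1) = 0"
  shows "(\<Sum>q\<in>{0..n+1}. g q) = (\<Sum>q\<in>{0..n}. g q)"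
proof (rule sum.mono_neutral_right)
  show "finite {0..n+1}" by simp
  show "{0..n} \<subseteq> {0..n+1}" by auto
  show "\<forall>i\<in>{0..n + 1} - {0..n}. g i = 0"
  proof
    fix i assume "i \<in> {0..n + 1} - {0..n}"
    then have "i = n + 1" by auto
    then show "g i = 0" using assms by simp
  qed
qed

lemma sum_shift_int:
  fixes n :: int
  assumes "g 0 = 0"
  shows "(\<Sum>q\<in>{0..n+1}. g q) = (\<Sum>q\<in>{0..n}. g (q + 1))"
proof -
  have "(\<Sum>q\<in>{0..n+1}. g q) = (\<Sum>q\<in>{1..n+1}. g q)"
  proof (rule sum.mono_neutral_right)
    show "finite {0..n+1}" by simp
    show "{1..n+1} \<subseteq> {0..n+1}" by auto
    show "\<forall>i\<in>{0..n + 1} - {1..n+1}. g i = 0"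
    proof
      fix i assume "i \<in> {0..n + 1} - {1..n+1}"
      then have "i = 0" by auto
      then show "g i = 0" using assms by simp
    qed
  qed
  also have "{1..n+1} = (\<lambda>q. q + 1) ` {0..n}" by (auto simp: image_iff intro: bexI[where x="_ - 1"])
  also have "(\<Sum>q\<in>(\<lambda>q. q + 1) ` {0..n}. g q) = (\<Sum>q\<in>{0..n}. g (q + 1))"
    by (rule sum.reindex_cong[where l="\<lambda>q. q + 1"]) (auto simp: inj_on_def)
  finally show ?thesis .
qed

lemma shuffle_comp: "shuffle_ext p q (\<lambda>ys. d (\<phi> ys)) G xs = shuffle_ext p q \<phi> (\<lambda>v. G (d v)) xs"
  by (simp add: shuffle_ext_def)

lemma ce_diff_sum:
  assumes "addF act"
  shows "ce_diff brk act (\<lambda>ys. \<Sum>q\<in>A. F q ys) xs = (\<Sum>q\<in>A. ce_diff brk act (F q) xs)"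
proof (induct A rule: infinite_finite_induct)
  case (infinite A)
  then show ?case using ce_diff_zero[of act brk xs] addF_0[OF assms] by simp
next
  case empty
  then show ?case using ce_diff_zero[of act brk xs] addF_0[OF assms] by simp
next
  case (insert a A)
  then show ?case by (simp add: ce_diff_add[OF assms])
qed

context LPc begin

definition Dgen :: "(int \<Rightarrow> 'v \<Rightarrow> 'g list \<Rightarrow> 'g) \<Rightarrow> int \<Rightarrow> 'v \<Rightarrow> 'g list \<Rightarrow> 'g" where
  "Dgen \<alpha> q = (\<lambda>v ys. \<alpha> (q + 1) (dV q v) ys - dG br br (actV q) (\<alpha> q) v ys)"

definition Egen :: "(int \<Rightarrow> 'v \<Rightarrow> 'g list \<Rightarrow> 'g) \<Rightarrow> int \<Rightarrow> 'v \<Rightarrow> 'g list \<Rightarrow> 'g" where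
  "Egen h q = (\<lambda>v ys. dG br br (actV q) (h q) v ys + h (q + 1) (dV q v) ys)"

lemma omega_le: "f \<in> omega sg sv Vc n \<Longrightarrow> q \<le> n \<Longrightarrow> f q \<in> alt_forms sg sv (nat (n - q)) (Vc q)"
  by (simp add: omega_def)

lemma omega_gt: "f \<in> omega sg sv Vc n \<Longrightarrow> n < q \<Longrightarrow> f q = (\<lambda>_. 0)"
  by (simp add: omega_def)

lemma omega_in: "f \<in> omega sg sv Vc n \<Longrightarrow> f q ys \<in> Vc q"
proof (cases "q \<le> n")
  case True
  assume f: "f \<in> omega sg sv Vc n"
  show ?thesis by (rule alt_in[OF omega_le[OF f True]]) simp
next
  case False
  assume f: "f \<in> omega sg sv Vc n"
  then show ?thesis using omega_gt[OF f] False by simp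
qed

lemma omega_neg: "f \<in> omega sg sv Vc n \<Longrightarrow> q < 0 \<Longrightarrow> f q ys = 0"
  using omega_in[of f n q ys] Vneg[of q] by auto

lemma G1:
  assumes \<alpha>: "\<alpha> \<in> deg0_gens sg sv Vc" and f: "f \<in> omega sg sv Vc n"
  shows "ext0 \<alpha> (n + 1) (dtot br actV dV n f) xs - ce_diff br br (ext0 \<alpha> n f) xs
       = (\<Sum>q\<in>{0..n}. isgn (n - q) (shuffle_ext (nat (n - q)) (Suc (nat q)) (f q) (Dgen \<alpha> q) xs))"
proof -
  define F where "F = dtot br actV dV n f"
  define A where "A = (\<lambda>q. shuffle_ext (nat (n + 1 - q)) (nat q) (ce_diff br (actV q) (f q)) (\<alpha> q) xs)"
  define B where "B = (\<lambda>q. isgn (n + 1 - q) (shuffle_ext (nat (n + 1 - q)) (nat q) (\<lambda>ys. dV (q - 1) (f (q - 1) ys)) (\<alpha> q) xs))"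
  have G: "\<And>q. gensp (nat q) q (\<alpha> q)" by (rule deg0_gensp[OF \<alpha>])
  have Gz: "\<And>q ys. \<alpha> q 0 ys = 0" using gensp_0[OF G] by simp
  have s1: "ext0 \<alpha> (n + 1) F xs = (\<Sum>q\<in>{0..n+1}. A q + B q)"
    unfolding ext0_def
  proof (rule sum.cong[OF refl])
    fix q assume q: "q \<in> {0..n+1}"
    have Fq: "F q = (\<lambda>ys. ce_diff br (actV q) (f q) ys + isgn (n + 1 - q) (dV (q - 1) (f (q - 1) ys)))"
      using q by (simp add: F_def dtot_def)
    have w1: "\<And>ys. ce_diff br (actV q) (f q) ys \<in> Vc q"
      by (rule ce_diff_in_W[OF grpV]) (auto intro: actW omega_in[OF f])
    have w2: "\<And>ys. dV (q - 1) (f (q - 1) ys) \<in> Vc q"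
      using dW[OF omega_in[OF f, of "q - 1"]] by simp
    show "shuffle_ext (nat (n + 1 - q)) (nat q) (F q) (\<alpha> q) xs = A q + B q"
      unfolding Fq A_def B_def
      by (simp add: shuffle_add1[OF gensp_addW[OF G] w1 grp_isgn[OF grpV w2]]
                    shuffle_isgn1[OF gensp_addW[OF G] grpV w2])
  qed
  have s2: "(\<Sum>q\<in>{0..n+1}. A q) = (\<Sum>q\<in>{0..n}. A q)"
  proof (rule sum_top_int)
    have e: "f (n + 1) = (\<lambda>_. 0)" by (rule omega_gt[OF f]) simp
    have "ce_diff br (actV (n + 1)) (f (n + 1)) ys = 0" for ys
      unfolding e by (rule ce_diff_zero) simp
    then have "ce_diff br (actV (n + 1)) (f (n + 1)) = (\<lambda>_. 0)" by (simp add: fun_eq_iff)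
    then show "A (n + 1) = 0" unfolding A_def by (simp add: shuffle_zero1 Gz)
  qed
  have s3: "(\<Sum>q\<in>{0..n+1}. B q) = (\<Sum>q\<in>{0..n}. isgn (n - q) (shuffle_ext (nat (n - q)) (Suc (nat q)) (f q) (\<lambda>v. \<alpha> (q + 1) (dV q v)) xs))"
  proof -
    have "(\<Sum>q\<in>{0..n+1}. B q) = (\<Sum>q\<in>{0..n}. B (q + 1))"
    proof (rule sum_shift_int)
      show "B 0 = 0" unfolding B_def using omega_neg[OF f, of "-1"] by (simp add: shuffle_zero1 Gz)
    qed
    also have "\<dots> = (\<Sum>q\<in>{0..n}. isgn (n - q) (shuffle_ext (nat (n - q)) (Suc (nat q)) (f q) (\<lambda>v. \<alpha> (q + 1) (dV q v)) xs))"
    proof (rule sum.cong[OF refl])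
      fix q assume q: "q \<in> {0..n}"
      have e: "nat (q + 1) = Suc (nat q)" "n + 1 - (q + 1) = n - q" using q by auto
      show "B (q + 1) = isgn (n - q) (shuffle_ext (nat (n - q)) (Suc (nat q)) (f q) (\<lambda>v. \<alpha> (q + 1) (dV q v)) xs)"
        unfolding B_def e by (simp add: shuffle_comp)
    qed
    finally show ?thesis .
  qed
  have s4: "ce_diff br br (ext0 \<alpha> n f) xs
      = (\<Sum>q\<in>{0..n}. A q + isgn (n - q) (shuffle_ext (nat (n - q)) (Suc (nat q)) (f q) (dG br br (actV q) (\<alpha> q)) xs))"
  proof -
    have "ce_diff br br (ext0 \<alpha> n f) xs = (\<Sum>q\<in>{0..n}. ce_diff br br (shuffle_ext (nat (n - q)) (nat q) (f q) (\<alpha> q)) xs)"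
      unfolding ext0_def by (rule ce_diff_sum[OF brF])
    also have "\<dots> = (\<Sum>q\<in>{0..n}. A q + isgn (n - q) (shuffle_ext (nat (n - q)) (Suc (nat q)) (f q) (dG br br (actV q) (\<alpha> q)) xs))"
    proof (rule sum.cong[OF refl])
      fix q assume q: "q \<in> {0..n}"
      have e: "Suc (nat (n - q)) = nat (n + 1 - q)" "int (nat (n - q)) = n - q" using q by auto
      show "ce_diff br br (shuffle_ext (nat (n - q)) (nat q) (f q) (\<alpha> q)) xs
          = A q + isgn (n - q) (shuffle_ext (nat (n - q)) (Suc (nat q)) (f q) (dG br br (actV q) (\<alpha> q)) xs)"
      proof -
        have qn: "q \<le> n" using q by simp
        show ?thesis unfolding leib_gen[OF omega_le[OF f qn] G] A_def e(1)[symmetric] e(2) by simp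
      qed
    qed
    finally show ?thesis .
  qed
  show ?thesis
    unfolding F_def[symmetric] s1 sum.distrib s2 s3 s4
    by (simp add: sum.distrib sum_subtractf Dgen_def shuffle_diff2 isgn_diff)
qed

end


lemma dG_zeroG:
  assumes "addF actB"
  shows "dG brk actB act (\<lambda>_ _. 0) v ys = 0"
proof -
  have "ce_diff brk (homact actB act) (\<lambda>zs w. 0) ys = 0"
    by (simp add: ce_diff_def homact_def addF_0[OF assms] fun_eq_iff sum_fun_apply isgn_fun_apply)
  then show ?thesis by (simp add: dG_def)
qed

context LPc begin

lemma G2:
  assumes h: "h \<in> degm1_gens sg sv Vc" and f: "f \<in> omega sg sv Vc n"
  shows "ce_diff br br (ext1 h n f) xs + ext1 h (n + 1) (dtot br actV dV n f) xs
       = (\<Sum>q\<in>{0..n}. shuffle_ext (nat (n - q)) (nat q) (f q) (Egen h q) xs)"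
proof -
  define F where "F = dtot br actV dV n f"
  define A where "A = (\<lambda>q. shuffle_ext (nat (n + 1 - q)) (nat q - 1) (ce_diff br (actV q) (f q)) (h q) xs)"
  define B where "B = (\<lambda>q. shuffle_ext (nat (n + 1 - q)) (nat q - 1) (\<lambda>ys. dV (q - 1) (f (q - 1) ys)) (h q) xs)"
  have G: "\<And>q. gensp (nat q - 1) q (h q)" by (rule degm1_gensp[OF h])
  have Gz: "\<And>q ys. h q 0 ys = 0" using gensp_0[OF G] by simp
  have ii: "\<And>k (z::'g). isgn k (isgn k z) = z" by (simp add: isgn_def)
  have s1: "ext1 h (n + 1) F xs = (\<Sum>q\<in>{0..n+1}. isgn (n + 1 - q) (A q) + B q)"
    unfolding ext1_def
  proof (rule sum.cong[OF refl])
    fix q assume q: "q \<in> {0..n+1}"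
    have Fq: "F q = (\<lambda>ys. ce_diff br (actV q) (f q) ys + isgn (n + 1 - q) (dV (q - 1) (f (q - 1) ys)))"
      using q by (simp add: F_def dtot_def)
    have w1: "\<And>ys. ce_diff br (actV q) (f q) ys \<in> Vc q"
      by (rule ce_diff_in_W[OF grpV]) (auto intro: actW omega_in[OF f])
    have w2: "\<And>ys. dV (q - 1) (f (q - 1) ys) \<in> Vc q"
      using dW[OF omega_in[OF f, of "q - 1"]] by simp
    show "isgn (n + 1 - q) (shuffle_ext (nat (n + 1 - q)) (nat q - 1) (F q) (h q) xs) = isgn (n + 1 - q) (A q) + B q"
      unfolding Fq A_def B_def
      by (simp add: shuffle_add1[OF gensp_addW[OF G] w1 grp_isgn[OF grpV w2]]
                    shuffle_isgn1[OF gensp_addW[OF G] grpV w2] isgn_add ii)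
  qed
  have s2: "(\<Sum>q\<in>{0..n+1}. isgn (n + 1 - q) (A q)) = (\<Sum>q\<in>{0..n}. isgn (n + 1 - q) (A q))"
  proof (rule sum_top_int)
    have e: "f (n + 1) = (\<lambda>_. 0)" by (rule omega_gt[OF f]) simp
    have "ce_diff br (actV (n + 1)) (f (n + 1)) ys = 0" for ys
      unfolding e by (rule ce_diff_zero) simp
    then have "ce_diff br (actV (n + 1)) (f (n + 1)) = (\<lambda>_. 0)" by (simp add: fun_eq_iff)
    then show "isgn (n + 1 - (n + 1)) (A (n + 1)) = 0" unfolding A_def by (simp add: shuffle_zero1 Gz)
  qed
  have s3: "(\<Sum>q\<in>{0..n+1}. B q) = (\<Sum>q\<in>{0..n}. shuffle_ext (nat (n - q)) (nat q) (f q) (\<lambda>v. h (q + 1) (dV q v)) xs)"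
  proof -
    have "(\<Sum>q\<in>{0..n+1}. B q) = (\<Sum>q\<in>{0..n}. B (q + 1))"
    proof (rule sum_shift_int)
      show "B 0 = 0" unfolding B_def using omega_neg[OF f, of "-1"] by (simp add: shuffle_zero1 Gz)
    qed
    also have "\<dots> = (\<Sum>q\<in>{0..n}. shuffle_ext (nat (n - q)) (nat q) (f q) (\<lambda>v. h (q + 1) (dV q v)) xs)"
    proof (rule sum.cong[OF refl])
      fix q assume q: "q \<in> {0..n}"
      have e: "nat (q + 1) - 1 = nat q" "n + 1 - (q + 1) = n - q" using q by auto
      show "B (q + 1) = shuffle_ext (nat (n - q)) (nat q) (f q) (\<lambda>v. h (q + 1) (dV q v)) xs"
        unfolding B_def e by (simp add: shuffle_comp)
    qed
    finally show ?thesis .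
  qed
  have s4: "ce_diff br br (ext1 h n f) xs
      = (\<Sum>q\<in>{0..n}. isgn (n - q) (A q) + shuffle_ext (nat (n - q)) (nat q) (f q) (dG br br (actV q) (h q)) xs)"
  proof -
    have "ce_diff br br (ext1 h n f) xs = (\<Sum>q\<in>{0..n}. ce_diff br br (\<lambda>ys. isgn (n - q) (shuffle_ext (nat (n - q)) (nat q - 1) (f q) (h q) ys)) xs)"
      unfolding ext1_def by (rule ce_diff_sum[OF brF])
    also have "\<dots> = (\<Sum>q\<in>{0..n}. isgn (n - q) (A q) + shuffle_ext (nat (n - q)) (nat q) (f q) (dG br br (actV q) (h q)) xs)"
    proof (rule sum.cong[OF refl])
      fix q assume q: "q \<in> {0..n}"
      have qn: "q \<le> n" using q by simp
      have e: "Suc (nat (n - q)) = nat (n + 1 - q)" "int (nat (n - q)) = n - q" using q by auto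
      have e2: "shuffle_ext (nat (n - q)) (Suc (nat q - 1)) (f q) (dG br br (actV q) (h q)) xs
          = shuffle_ext (nat (n - q)) (nat q) (f q) (dG br br (actV q) (h q)) xs"
      proof (cases "q = 0")
        case True
        have hz: "h q = (\<lambda>_ _. 0)" using degm1_nonpos[OF h] True by (simp add: fun_eq_iff)
        show ?thesis unfolding hz by (simp add: shuffle_zero2 dG_zeroG[OF brF])
      next
        case False
        then have "Suc (nat q - 1) = nat q" using q by auto
        then show ?thesis by simp
      qed
      show "ce_diff br br (\<lambda>ys. isgn (n - q) (shuffle_ext (nat (n - q)) (nat q - 1) (f q) (h q) ys)) xs
          = isgn (n - q) (A q) + shuffle_ext (nat (n - q)) (nat q) (f q) (dG br br (actV q) (h q)) xs"
        unfolding ce_diff_isgn[OF brF] leib_gen[OF omega_le[OF f qn] G] A_def e(1)[symmetric] e(2) e2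
        by (simp add: isgn_add ii)
    qed
    finally show ?thesis .
  qed
  have canc: "\<And>q. isgn (n - q) (A q) + isgn (n + 1 - q) (A q) = 0"
    by (simp add: isgn_def)
  have "ce_diff br br (ext1 h n f) xs + ext1 h (n + 1) F xs
      = (\<Sum>q\<in>{0..n}. isgn (n - q) (A q) + shuffle_ext (nat (n - q)) (nat q) (f q) (dG br br (actV q) (h q)) xs)
        + ((\<Sum>q\<in>{0..n}. isgn (n + 1 - q) (A q)) + (\<Sum>q\<in>{0..n}. shuffle_ext (nat (n - q)) (nat q) (f q) (\<lambda>v. h (q + 1) (dV q v)) xs))"
    unfolding s1 s4 sum.distrib s2 s3 ..
  also have "\<dots> = (\<Sum>q\<in>{0..n}. (isgn (n - q) (A q) + shuffle_ext (nat (n - q)) (nat q) (f q) (dG br br (actV q) (h q)) xs)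
        + (isgn (n + 1 - q) (A q) + shuffle_ext (nat (n - q)) (nat q) (f q) (\<lambda>v. h (q + 1) (dV q v)) xs))"
    by (simp only: sum.distrib)
  also have "\<dots> = (\<Sum>q\<in>{0..n}. shuffle_ext (nat (n - q)) (nat q) (f q) (Egen h q) xs)"
  proof (rule sum.cong[OF refl])
    fix q
    let ?a = "isgn (n - q) (A q)" and ?b = "isgn (n + 1 - q) (A q)"
      and ?c = "shuffle_ext (nat (n - q)) (nat q) (f q) (dG br br (actV q) (h q)) xs"
      and ?d = "shuffle_ext (nat (n - q)) (nat q) (f q) (\<lambda>v. h (q + 1) (dV q v)) xs"
    have "?a + ?c + (?b + ?d) = (?a + ?b) + (?c + ?d)" by (simp only: add.assoc add.left_commute)
    also have "\<dots> = ?c + ?d" by (simp only: canc add_0_left)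
    also have "\<dots> = shuffle_ext (nat (n - q)) (nat q) (f q) (Egen h q) xs"
      unfolding Egen_def by (rule shuffle_add2[symmetric])
    finally show "?a + ?c + (?b + ?d) = shuffle_ext (nat (n - q)) (nat q) (f q) (Egen h q) xs" .
  qed
  finally show ?thesis unfolding F_def .
qed
end


context LPc begin

lemma alt_hom_iff:
  "(\<lambda>xs v. \<gamma> v xs) \<in> alt_forms sg (Hom_scale sg) P (Hom_c sg sv Vc (- k)) \<longleftrightarrow> gensp P k \<gamma>"
proof
  assume a: "(\<lambda>xs v. \<gamma> v xs) \<in> alt_forms sg (Hom_scale sg) P (Hom_c sg sv Vc (- k))"
  have L1: "\<And>xs. length xs = P \<Longrightarrow> lin_on sv sg (Vc k) (\<lambda>v. \<gamma> v xs) \<and> (\<forall>v. v \<notin> Vc k \<longrightarrow> \<gamma> v xs = 0)"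
    using a by (simp add: alt_forms_def Hom_c_def)
  have L2: "\<And>xs v. length xs \<noteq> P \<Longrightarrow> \<gamma> v xs = 0"
    using a by (simp add: alt_forms_def fun_eq_iff)
  have L3: "\<And>xs i y z v. length xs = P \<Longrightarrow> i < P \<Longrightarrow> \<gamma> v (xs[i := y + z]) = \<gamma> v (xs[i := y]) + \<gamma> v (xs[i := z])"
    using a by (simp add: alt_forms_def fun_eq_iff)
  have L4: "\<And>xs i c y v. length xs = P \<Longrightarrow> i < P \<Longrightarrow> \<gamma> v (xs[i := sg c y]) = sg c (\<gamma> v (xs[i := y]))"
    using a by (simp add: alt_forms_def fun_eq_iff Hom_scale_def)
  have L5: "\<And>xs i j v. length xs = P \<Longrightarrow> i < j \<Longrightarrow> j < P \<Longrightarrow> xs ! i = xs ! j \<Longrightarrow> \<gamma> v xs = 0"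
    using a unfolding alt_forms_def by (simp add: fun_eq_iff) blast
  have R1: "\<forall>v. v \<notin> Vc k \<longrightarrow> \<gamma> v = (\<lambda>_. 0)"
  proof (intro allI impI ext)
    fix v xs assume "v \<notin> Vc k"
    then show "\<gamma> v xs = 0" using L1[of xs] L2[of xs v] by (cases "length xs = P") auto
  qed
  have R2: "\<forall>v\<in>Vc k. \<gamma> v \<in> alt_forms sg sg P UNIV"
    using L2 L3 L4 L5 by (simp add: alt_forms_def) blast
  have R3: "lin_on sv (\<lambda>c F xs. sg c (F xs)) (Vc k) \<gamma>"
    unfolding lin_on_def
  proof (intro conjI ballI allI ext)
    fix v w xs assume "v \<in> Vc k" "w \<in> Vc k"
    then show "\<gamma> (v + w) xs = (\<gamma> v + \<gamma> w) xs"
      using L1[of xs] L2[of xs] by (cases "length xs = P") (auto simp: lin_on_def)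
  next
    fix c v xs assume "v \<in> Vc k"
    then show "\<gamma> (sv c v) xs = sg c (\<gamma> v xs)"
      using L1[of xs] L2[of xs] by (cases "length xs = P") (auto simp: lin_on_def)
  qed
  show "gensp P k \<gamma>" unfolding gensp_def using R1 R2 R3 by blast
next
  assume g: "gensp P k \<gamma>"
  have g1: "\<And>v. v \<notin> Vc k \<Longrightarrow> \<gamma> v = (\<lambda>_. 0)" using g by (simp add: gensp_def)
  have g2: "\<And>v. v \<in> Vc k \<Longrightarrow> \<gamma> v \<in> alt_forms sg sg P UNIV" using g by (simp add: gensp_def)
  have g3: "lin_on sv (\<lambda>c F xs. sg c (F xs)) (Vc k) \<gamma>" using g by (simp add: gensp_def)
  show "(\<lambda>xs v. \<gamma> v xs) \<in> alt_forms sg (Hom_scale sg) P (Hom_c sg sv Vc (- k))"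
    unfolding alt_forms_def Hom_c_def Hom_scale_def
    apply (intro CollectI conjI allI impI)
    apply (auto simp: fun_eq_iff lin_on_def)
    subgoal using g3 by (simp add: lin_on_def)
    subgoal using g3 by (simp add: lin_on_def)
    subgoal using g1 by simp
    subgoal for xs x using g1[of x] g2[of x] by (cases "x \<in> Vc k") (auto simp: alt_forms_def)
    subgoal for xs i y z x using g1[of x] g2[of x] by (cases "x \<in> Vc k") (auto simp: alt_forms_def)
    subgoal for xs i c y x using g1[of x] g2[of x] by (cases "x \<in> Vc k") (auto simp: alt_forms_def)
    subgoal for xs i j x using g1[of x] g2[of x] unfolding alt_forms_def by (cases "x \<in> Vc k") (auto, blast)
    done
qed

definition hat :: "(int \<Rightarrow> 'v \<Rightarrow> 'g list \<Rightarrow> 'g) \<Rightarrow> int \<Rightarrow> 'g list \<Rightarrow> 'v \<Rightarrow> 'g" where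
  "hat \<gamma> = (\<lambda>q xs v. \<gamma> (- q) v xs)"

lemma gensp_zero: "gensp s k (\<lambda>_ _. 0)"
  by (simp add: gensp_def alt_zero lin_on_def fun_eq_iff)

lemma omega_hat_iff:
  "hat \<gamma> \<in> omega sg (Hom_scale sg) (Hom_c sg sv Vc) n \<longleftrightarrow>
     (\<forall>k. (- n \<le> k \<longrightarrow> gensp (nat (n + k)) k (\<gamma> k)) \<and> (k < - n \<longrightarrow> (\<forall>v. \<gamma> k v = (\<lambda>_. 0))))"
proof -
  have "hat \<gamma> \<in> omega sg (Hom_scale sg) (Hom_c sg sv Vc) n \<longleftrightarrow>
     (\<forall>q. (q \<le> n \<longrightarrow> (\<lambda>xs v. \<gamma> (- q) v xs) \<in> alt_forms sg (Hom_scale sg) (nat (n - q)) (Hom_c sg sv Vc (- (- q))))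
        \<and> (n < q \<longrightarrow> (\<forall>v. \<gamma> (- q) v = (\<lambda>_. 0))))"
    by (simp add: omega_def hat_def fun_eq_iff) blast
  also have "\<dots> \<longleftrightarrow> (\<forall>q. (q \<le> n \<longrightarrow> gensp (nat (n - q)) (- q) (\<gamma> (- q))) \<and> (n < q \<longrightarrow> (\<forall>v. \<gamma> (- q) v = (\<lambda>_. 0))))"
    by (simp only: alt_hom_iff)
  also have "\<dots> \<longleftrightarrow> (\<forall>k. (- n \<le> k \<longrightarrow> gensp (nat (n + k)) k (\<gamma> k)) \<and> (k < - n \<longrightarrow> (\<forall>v. \<gamma> k v = (\<lambda>_. 0))))"
  proof
    assume a: "\<forall>q. (q \<le> n \<longrightarrow> gensp (nat (n - q)) (- q) (\<gamma> (- q))) \<and> (n < q \<longrightarrow> (\<forall>v. \<gamma> (- q) v = (\<lambda>_. 0)))"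
    show "\<forall>k. (- n \<le> k \<longrightarrow> gensp (nat (n + k)) k (\<gamma> k)) \<and> (k < - n \<longrightarrow> (\<forall>v. \<gamma> k v = (\<lambda>_. 0)))"
    proof
      fix k show "(- n \<le> k \<longrightarrow> gensp (nat (n + k)) k (\<gamma> k)) \<and> (k < - n \<longrightarrow> (\<forall>v. \<gamma> k v = (\<lambda>_. 0)))"
        using a[rule_format, of "- k"] by simp
    qed
  next
    assume a: "\<forall>k. (- n \<le> k \<longrightarrow> gensp (nat (n + k)) k (\<gamma> k)) \<and> (k < - n \<longrightarrow> (\<forall>v. \<gamma> k v = (\<lambda>_. 0)))"
    show "\<forall>q. (q \<le> n \<longrightarrow> gensp (nat (n - q)) (- q) (\<gamma> (- q))) \<and> (n < q \<longrightarrow> (\<forall>v. \<gamma> (- q) v = (\<lambda>_. 0)))"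
    proof
      fix q show "(q \<le> n \<longrightarrow> gensp (nat (n - q)) (- q) (\<gamma> (- q))) \<and> (n < q \<longrightarrow> (\<forall>v. \<gamma> (- q) v = (\<lambda>_. 0)))"
        using a[rule_format, of "- q"] by simp
    qed
  qed
  finally show ?thesis .
qed

lemma deg0_iff: "\<alpha> \<in> deg0_gens sg sv Vc \<longleftrightarrow> (\<forall>k. gensp (nat k) k (\<alpha> k))"
  by (simp add: deg0_gens_def gensp_def)

lemma deg0_hat: "\<alpha> \<in> deg0_gens sg sv Vc \<longleftrightarrow> hat \<alpha> \<in> omega sg (Hom_scale sg) (Hom_c sg sv Vc) 0"
proof
  assume a: "\<alpha> \<in> deg0_gens sg sv Vc"
  show "hat \<alpha> \<in> omega sg (Hom_scale sg) (Hom_c sg sv Vc) 0"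
    unfolding omega_hat_iff using deg0_gensp[OF a] deg0_neg[OF a] by simp
next
  assume a: "hat \<alpha> \<in> omega sg (Hom_scale sg) (Hom_c sg sv Vc) 0"
  show "\<alpha> \<in> deg0_gens sg sv Vc"
    unfolding deg0_iff
  proof
    fix k
    show "gensp (nat k) k (\<alpha> k)"
    proof (cases "0 \<le> k")
      case True then show ?thesis using a unfolding omega_hat_iff by simp
    next
      case False
      then have "\<alpha> k = (\<lambda>_ _. 0)" using a unfolding omega_hat_iff by (simp add: fun_eq_iff)
      then show ?thesis using gensp_zero by simp
    qed
  qed
qed

lemma degm1_hat: "h \<in> degm1_gens sg sv Vc \<longleftrightarrow> hat h \<in> omega sg (Hom_scale sg) (Hom_c sg sv Vc) (-1)"
proof
  assume a: "h \<in> degm1_gens sg sv Vc"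
  show "hat h \<in> omega sg (Hom_scale sg) (Hom_c sg sv Vc) (-1)"
    unfolding omega_hat_iff
  proof (intro allI conjI impI)
    fix k :: int assume "- (-1) \<le> k"
    have "gensp (nat k - 1) k (h k)" by (rule degm1_gensp[OF a])
    moreover have "nat (-1 + k) = nat k - 1" by simp
    ultimately show "gensp (nat (-1 + k)) k (h k)" by simp
  next
    fix k :: int and v assume "k < - (-1)"
    then show "h k v = (\<lambda>_. 0)" using degm1_nonpos[OF a] by simp
  qed
next
  assume a: "hat h \<in> omega sg (Hom_scale sg) (Hom_c sg sv Vc) (-1)"
  show "h \<in> degm1_gens sg sv Vc"
    unfolding degm1_gens_def
  proof (intro CollectI allI)
    fix k
    have g: "gensp (nat (k - 1)) k (h k)"
    proof (cases "1 \<le> k")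
      case True then show ?thesis using a unfolding omega_hat_iff by (simp add: add.commute)
    next
      case False
      then have "h k = (\<lambda>_ _. 0)" using a unfolding omega_hat_iff by (simp add: fun_eq_iff)
      then show ?thesis using gensp_zero by simp
    qed
    have z: "k \<le> 0 \<longrightarrow> (\<forall>v. h k v = (\<lambda>_. 0))" using a unfolding omega_hat_iff by simp
    show "(\<forall>v. v \<notin> Vc k \<longrightarrow> h k v = (\<lambda>_. 0)) \<and> (k \<le> 0 \<longrightarrow> (\<forall>v. h k v = (\<lambda>_. 0))) \<and>
          (\<forall>v\<in>Vc k. h k v \<in> alt_forms sg sg (nat (k - 1)) UNIV) \<and> lin_on sv (\<lambda>c F xs. sg c (F xs)) (Vc k) (h k)"
      using g z unfolding gensp_def by blast
  qed
qed

lemma cmap_hat: "\<alpha> \<in> deg0_gens sg sv Vc \<Longrightarrow> cmap \<alpha> = hat \<alpha>"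
  using deg0_neg by (auto simp: cmap_def hat_def fun_eq_iff)

lemma hat_un: "hat (\<lambda>k v xs. c (- k) xs v) = c"
  by (simp add: hat_def)

lemma un_hat: "(\<lambda>k v xs. hat \<gamma> (- k) xs v) = \<gamma>"
  by (simp add: hat_def)

lemma ce_diff_apply_cong:
  assumes "\<And>x c. A1 x c v = A2 x c v"
  shows "ce_diff brk A1 F xs v = ce_diff brk A2 F xs v"
  using assms by (simp add: ce_diff_def sum_fun_apply isgn_fun_apply)

lemma dtot_hat:
  assumes out: "\<And>k v. v \<notin> Vc k \<Longrightarrow> \<gamma> k v = (\<lambda>_. 0)"
  shows "dtot br (Hom_act br Vc actV) (Hom_d Vc dV) n (hat \<gamma>) q xs v
    = (if q \<le> n + 1 \<and> v \<in> Vc (- q) then dG br br (actV (- q)) (\<gamma> (- q)) v xs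
         + isgn (n + 1) (\<gamma> (1 - q) (dV (- q) v) xs) else 0)"
proof (cases "q \<le> n + 1")
  case False then show ?thesis by (simp add: dtot_def)
next
  case True
  have hd: "isgn (n + 1 - q) (Hom_d Vc dV (q - 1) (hat \<gamma> (q - 1) xs)) v
      = (if v \<in> Vc (- q) then isgn (n + 1) (\<gamma> (1 - q) (dV (- q) v) xs) else 0)"
    by (simp add: Hom_d_def hat_def isgn_fun_apply isgn_isgn)
  have cd: "ce_diff br (Hom_act br Vc actV q) (hat \<gamma> q) xs v
      = (if v \<in> Vc (- q) then dG br br (actV (- q)) (\<gamma> (- q)) v xs else 0)"
  proof (cases "v \<in> Vc (- q)")
    case True
    have "ce_diff br (Hom_act br Vc actV q) (hat \<gamma> q) xs v = ce_diff br (homact br (actV (- q))) (hat \<gamma> q) xs v"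
      by (rule ce_diff_apply_cong) (simp add: Hom_act_def homact_def True)
    then show ?thesis using True by (simp add: dG_def hat_def)
  next
    case False
    have z: "\<And>zs. hat \<gamma> q zs v = 0" using out[OF False] by (simp add: hat_def)
    show ?thesis using False
      by (simp add: ce_diff_def sum_fun_apply isgn_fun_apply Hom_act_def z)
  qed
  show ?thesis using True by (simp add: dtot_def hd cd)
qed

lemma shuffle_p0: "shuffle_ext 0 m \<phi> G xs = (if length xs = m then G (\<phi> []) xs else 0)"
proof -
  have e: "{I. I \<subseteq> {..<m} \<and> card I = 0} = {{}}"
    by (auto dest: finite_subset[OF _ finite_lessThan])
  have "length xs = m \<Longrightarrow> nths xs {..<m} = xs" by (simp add: nths_all)
  then show ?thesis by (simp add: shuffle_ext_def e)
qed

definition sp :: "int \<Rightarrow> 'v \<Rightarrow> int \<Rightarrow> 'g list \<Rightarrow> 'v" where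
  "sp k v = (\<lambda>q ys. if q = k \<and> ys = [] then v else 0)"

lemma sp_omega: "v \<in> Vc k \<Longrightarrow> sp k v \<in> omega sg sv Vc k"
proof -
  assume v: "v \<in> Vc k"
  have sv0: "\<And>c. sv c 0 = 0" using module.scale_zero_right[OF sv_mod] .
  show ?thesis unfolding omega_def
  proof (intro CollectI allI conjI impI)
    fix q assume q: "q \<le> k"
    show "sp k v q \<in> alt_forms sg sv (nat (k - q)) (Vc q)"
    proof (cases "q = k")
      case True
      then show ?thesis using v by (auto simp: alt_forms_def sp_def)
    next
      case False
      then have "sp k v q = (\<lambda>_. 0)" by (simp add: sp_def fun_eq_iff)
      then show ?thesis using alt_zero[of "Vc q" sv] sv0 by simp
    qed
  next
    fix q assume "k < q"
    then show "sp k v q = (\<lambda>_. 0)" by (simp add: sp_def fun_eq_iff)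
  qed
qed

lemma sp_sum:
  assumes k: "0 \<le> k" and G0: "\<And>q ys. G q 0 ys = 0"
  shows "(\<Sum>q\<in>{0..k}. isgn (k - q) (shuffle_ext (nat (k - q)) (m q) (sp k v q) (G q) xs))
       = (if length xs = m k then G k v xs else 0)"
proof -
  have "(\<Sum>q\<in>{0..k}. isgn (k - q) (shuffle_ext (nat (k - q)) (m q) (sp k v q) (G q) xs))
      = (\<Sum>q\<in>{0..k}. if q = k then (if length xs = m k then G k v xs else 0) else 0)"
  proof (rule sum.cong[OF refl])
    fix q assume "q \<in> {0..k}"
    show "isgn (k - q) (shuffle_ext (nat (k - q)) (m q) (sp k v q) (G q) xs)
        = (if q = k then (if length xs = m k then G k v xs else 0) else 0)"
    proof (cases "q = k")
      case True
      have "sp k v k = (\<lambda>ys. if ys = [] then v else 0)" by (simp add: sp_def fun_eq_iff)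
      then show ?thesis using True by (simp add: shuffle_p0)
    next
      case False
      then have "sp k v q = (\<lambda>_. 0)" by (simp add: sp_def fun_eq_iff)
      then show ?thesis using False by (simp add: shuffle_zero1 G0)
    qed
  qed
  also have "\<dots> = (if length xs = m k then G k v xs else 0)" using k by simp
  finally show ?thesis .
qed

end


context LPc begin

lemma sp_sum2:
  assumes k: "0 \<le> k" and G0: "\<And>q ys. G q 0 ys = 0"
  shows "(\<Sum>q\<in>{0..k}. shuffle_ext (nat (k - q)) (m q) (sp k v q) (G q) xs)
       = (if length xs = m k then G k v xs else 0)"
proof -
  have "(\<Sum>q\<in>{0..k}. shuffle_ext (nat (k - q)) (m q) (sp k v q) (G q) xs)
      = (\<Sum>q\<in>{0..k}. if q = k then (if length xs = m k then G k v xs else 0) else 0)"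
  proof (rule sum.cong[OF refl])
    fix q assume "q \<in> {0..k}"
    show "shuffle_ext (nat (k - q)) (m q) (sp k v q) (G q) xs
        = (if q = k then (if length xs = m k then G k v xs else 0) else 0)"
    proof (cases "q = k")
      case True
      have "sp k v k = (\<lambda>ys. if ys = [] then v else 0)" by (simp add: sp_def fun_eq_iff)
      then show ?thesis using True by (simp add: shuffle_p0)
    next
      case False
      then have "sp k v q = (\<lambda>_. 0)" by (simp add: sp_def fun_eq_iff)
      then show ?thesis using False by (simp add: shuffle_zero1 G0)
    qed
  qed
  also have "\<dots> = (if length xs = m k then G k v xs else 0)" using k by simp
  finally show ?thesis .
qed

lemma gen0: "\<alpha> \<in> deg0_gens sg sv Vc \<Longrightarrow> \<alpha> q 0 ys = 0"
  using gensp_0[OF deg0_gensp] by (metis)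

lemma dG0_gen: "gensp s q G \<Longrightarrow> dG br br (actV q) G 0 ys = 0"
  by (rule dG_0) (use brF gensp_0 in auto)

lemma Dgen0: "\<alpha> \<in> deg0_gens sg sv Vc \<Longrightarrow> Dgen \<alpha> q 0 ys = 0"
  using dG0_gen[OF deg0_gensp] gen0 by (simp add: Dgen_def)

lemma Dgen_vanish:
  assumes a: "\<alpha> \<in> deg0_gens sg sv Vc" and k: "0 \<le> k" and l: "length xs \<noteq> Suc (nat k)"
  shows "Dgen \<alpha> k v xs = 0"
proof -
  have "\<alpha> (k + 1) (dV k v) xs = 0"
    by (rule gensp_vanish[OF deg0_gensp[OF a]]) (use k l in auto)
  moreover have "dG br br (actV k) (\<alpha> k) v xs = 0"
    by (rule dG_vanish) (use brF gensp_vanish[OF deg0_gensp[OF a]] l in auto)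
  ultimately show ?thesis by (simp add: Dgen_def)
qed

lemma shuffle_zero_on_range:
  assumes "\<And>v. v \<in> range \<phi> \<Longrightarrow> G v = (\<lambda>_. 0)"
  shows "shuffle_ext p s \<phi> G xs = 0"
proof -
  have "shuffle_ext p s \<phi> G xs = shuffle_ext p s \<phi> (\<lambda>_ _. 0) xs"
    by (rule shuffle_cong) (use assms in auto)
  then show ?thesis by (simp add: shuffle_zero2)
qed

lemma LP_iff:
  "\<alpha> \<in> LP_structures sg br sv Vc actV dV \<longleftrightarrow>
     \<alpha> \<in> deg0_gens sg sv Vc \<and> (\<forall>k\<ge>0. \<forall>v\<in>Vc k. Dgen \<alpha> k v = (\<lambda>_. 0))"
proof
  assume a: "\<alpha> \<in> LP_structures sg br sv Vc actV dV"
  then have \<alpha>: "\<alpha> \<in> deg0_gens sg sv Vc" by (simp add: LP_structures_def)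
  have LP: "\<And>n f. f \<in> omega sg sv Vc n \<Longrightarrow> ext0 \<alpha> (n + 1) (dtot br actV dV n f) = ce_diff br br (ext0 \<alpha> n f)"
    using a by (simp add: LP_structures_def)
  have "Dgen \<alpha> k v = (\<lambda>_. 0)" if k: "0 \<le> k" and v: "v \<in> Vc k" for k v
  proof
    fix xs
    have f: "sp k v \<in> omega sg sv Vc k" by (rule sp_omega[OF v])
    have "0 = ext0 \<alpha> (k + 1) (dtot br actV dV k (sp k v)) xs - ce_diff br br (ext0 \<alpha> k (sp k v)) xs"
      using LP[OF f] by simp
    also have "\<dots> = (\<Sum>q\<in>{0..k}. isgn (k - q) (shuffle_ext (nat (k - q)) (Suc (nat q)) (sp k v q) (Dgen \<alpha> q) xs))"
      by (rule G1[OF \<alpha> f])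
    also have "\<dots> = (if length xs = Suc (nat k) then Dgen \<alpha> k v xs else 0)"
      by (rule sp_sum[OF k]) (rule Dgen0[OF \<alpha>])
    finally show "Dgen \<alpha> k v xs = 0" using Dgen_vanish[OF \<alpha> k] by (cases "length xs = Suc (nat k)") auto
  qed
  then show "\<alpha> \<in> deg0_gens sg sv Vc \<and> (\<forall>k\<ge>0. \<forall>v\<in>Vc k. Dgen \<alpha> k v = (\<lambda>_. 0))" using \<alpha> by blast
next
  assume a: "\<alpha> \<in> deg0_gens sg sv Vc \<and> (\<forall>k\<ge>0. \<forall>v\<in>Vc k. Dgen \<alpha> k v = (\<lambda>_. 0))"
  then have \<alpha>: "\<alpha> \<in> deg0_gens sg sv Vc" and D: "\<And>k v. 0 \<le> k \<Longrightarrow> v \<in> Vc k \<Longrightarrow> Dgen \<alpha> k v = (\<lambda>_. 0)" by auto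
  show "\<alpha> \<in> LP_structures sg br sv Vc actV dV"
    unfolding LP_structures_def
  proof (intro CollectI conjI \<alpha> allI ballI ext)
    fix n f xs assume f: "f \<in> omega sg sv Vc n"
    have "ext0 \<alpha> (n + 1) (dtot br actV dV n f) xs - ce_diff br br (ext0 \<alpha> n f) xs
        = (\<Sum>q\<in>{0..n}. isgn (n - q) (shuffle_ext (nat (n - q)) (Suc (nat q)) (f q) (Dgen \<alpha> q) xs))"
      by (rule G1[OF \<alpha> f])
    also have "\<dots> = 0"
    proof (rule sum.neutral, rule ballI)
      fix q assume q: "q \<in> {0..n}"
      have "shuffle_ext (nat (n - q)) (Suc (nat q)) (f q) (Dgen \<alpha> q) xs = 0"
        by (rule shuffle_zero_on_range) (use D q omega_in[OF f] in auto)
      then show "isgn (n - q) (shuffle_ext (nat (n - q)) (Suc (nat q)) (f q) (Dgen \<alpha> q) xs) = 0" by simp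
    qed
    finally show "ext0 \<alpha> (n + 1) (dtot br actV dV n f) xs = ce_diff br br (ext0 \<alpha> n f) xs" by simp
  qed
qed

lemma cocycle_iff:
  assumes \<alpha>: "\<alpha> \<in> deg0_gens sg sv Vc"
  shows "cmap \<alpha> \<in> cocycles0 sg br sv Vc actV dV \<longleftrightarrow> (\<forall>k\<ge>0. \<forall>v\<in>Vc k. Dgen \<alpha> k v = (\<lambda>_. 0))"
proof -
  have out: "\<And>k v. v \<notin> Vc k \<Longrightarrow> \<alpha> k v = (\<lambda>_. 0)" using \<alpha> by (simp add: deg0_gens_def)
  have om: "cmap \<alpha> \<in> omega sg (Hom_scale sg) (Hom_c sg sv Vc) 0"
    using deg0_hat \<alpha> cmap_hat by simp
  have dt: "\<And>q xs v. dtot br (Hom_act br Vc actV) (Hom_d Vc dV) 0 (cmap \<alpha>) q xs v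
      = (if q \<le> 1 \<and> v \<in> Vc (- q) then - Dgen \<alpha> (- q) v xs else 0)"
  proof -
    fix q xs v
    have "dtot br (Hom_act br Vc actV) (Hom_d Vc dV) 0 (hat \<alpha>) q xs v
      = (if q \<le> 0 + 1 \<and> v \<in> Vc (- q) then dG br br (actV (- q)) (\<alpha> (- q)) v xs
         + isgn (0 + 1) (\<alpha> (1 - q) (dV (- q) v) xs) else 0)"
      by (rule dtot_hat[OF out])
    then show "dtot br (Hom_act br Vc actV) (Hom_d Vc dV) 0 (cmap \<alpha>) q xs v
      = (if q \<le> 1 \<and> v \<in> Vc (- q) then - Dgen \<alpha> (- q) v xs else 0)"
      unfolding cmap_hat[OF \<alpha>] by (simp add: Dgen_def isgn_def add.commute)
  qed
  show ?thesis
  proof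
    assume "cmap \<alpha> \<in> cocycles0 sg br sv Vc actV dV"
    then have z: "\<And>q xs v. dtot br (Hom_act br Vc actV) (Hom_d Vc dV) 0 (cmap \<alpha>) q xs v = 0"
      by (simp add: cocycles0_def)
    show "\<forall>k\<ge>0. \<forall>v\<in>Vc k. Dgen \<alpha> k v = (\<lambda>_. 0)"
    proof (intro allI impI ballI ext)
      fix k v xs assume "0 \<le> k" "v \<in> Vc k"
      then show "Dgen \<alpha> k v xs = 0" using z[of "- k" xs v] dt[of "- k" xs v] by simp
    qed
  next
    assume D: "\<forall>k\<ge>0. \<forall>v\<in>Vc k. Dgen \<alpha> k v = (\<lambda>_. 0)"
    have "dtot br (Hom_act br Vc actV) (Hom_d Vc dV) 0 (cmap \<alpha>) = (\<lambda>_ _. 0)"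
    proof (intro ext)
      fix q xs v
      show "dtot br (Hom_act br Vc actV) (Hom_d Vc dV) 0 (cmap \<alpha>) q xs v = 0 v"
      proof (cases "q \<le> 1 \<and> v \<in> Vc (- q)")
        case True
        show ?thesis
        proof (cases "q \<le> 0")
          case True
          then show ?thesis using D \<open>q \<le> 1 \<and> v \<in> Vc (- q)\<close> dt[of q xs v] by simp
        next
          case False
          then have q1: "q = 1" using True by simp
          then have "v = 0" using True Vneg[of "-1"] by simp
          then show ?thesis using dt[of q xs v] q1 Dgen0[OF \<alpha>] by simp
        qed
      next
        case False then show ?thesis using dt[of q xs v] by auto
      qed
    qed
    then show "cmap \<alpha> \<in> cocycles0 sg br sv Vc actV dV" using om by (simp add: cocycles0_def)
  qed
qed

end


context LPc begin

lemma Egen0: "h \<in> degm1_gens sg sv Vc \<Longrightarrow> Egen h q 0 ys = 0"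
  using dG0_gen[OF degm1_gensp] gensp_0[OF degm1_gensp] by (simp add: Egen_def)

lemma Egen_vanish:
  assumes h: "h \<in> degm1_gens sg sv Vc" and k: "0 \<le> k" and l: "length xs \<noteq> nat k"
  shows "Egen h k v xs = 0"
proof -
  have a: "h (k + 1) (dV k v) xs = 0"
    by (rule gensp_vanish[OF degm1_gensp[OF h]]) (use k l in auto)
  have b: "dG br br (actV k) (h k) v xs = 0"
  proof (cases "k = 0")
    case True
    then have "h k = (\<lambda>_ _. 0)" using degm1_nonpos[OF h] by (simp add: fun_eq_iff)
    then show ?thesis by (simp add: dG_zeroG[OF brF])
  next
    case False
    show ?thesis
      by (rule dG_vanish) (use brF gensp_vanish[OF degm1_gensp[OF h]] l k False in auto)
  qed
  show ?thesis using a b by (simp add: Egen_def)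
qed

lemma ext0_diff:
  "ext0 \<alpha>' n f xs - ext0 \<alpha> n f xs
     = (\<Sum>q\<in>{0..n}. shuffle_ext (nat (n - q)) (nat q) (f q) (\<lambda>v ys. \<alpha>' q v ys - \<alpha> q v ys) xs)"
  by (simp add: ext0_def sum_subtractf shuffle_diff2)

lemma homot_iff:
  assumes \<alpha>: "\<alpha> \<in> deg0_gens sg sv Vc" and \<alpha>': "\<alpha>' \<in> deg0_gens sg sv Vc"
  shows "LP_homotopic sg br sv Vc actV dV \<alpha> \<alpha>' \<longleftrightarrow>
    (\<exists>h\<in>degm1_gens sg sv Vc. \<forall>k\<ge>0. \<forall>v\<in>Vc k. Egen h k v = (\<lambda>ys. \<alpha>' k v ys - \<alpha> k v ys))"
proof
  assume "LP_homotopic sg br sv Vc actV dV \<alpha> \<alpha>'"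
  then obtain h where h: "h \<in> degm1_gens sg sv Vc"
    and H: "\<And>n f xs. f \<in> omega sg sv Vc n \<Longrightarrow> ext0 \<alpha>' n f xs - ext0 \<alpha> n f xs =
        ce_diff br br (ext1 h n f) xs + ext1 h (n + 1) (dtot br actV dV n f) xs"
    unfolding LP_homotopic_def by blast
  have "Egen h k v = (\<lambda>ys. \<alpha>' k v ys - \<alpha> k v ys)" if k: "0 \<le> k" and v: "v \<in> Vc k" for k v
  proof
    fix xs
    have f: "sp k v \<in> omega sg sv Vc k" by (rule sp_omega[OF v])
    have G0: "\<And>q ys. \<alpha>' q 0 ys - \<alpha> q 0 ys = 0" using gen0[OF \<alpha>] gen0[OF \<alpha>'] by simp
    have "(if length xs = nat k then \<alpha>' k v xs - \<alpha> k v xs else 0)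
        = (\<Sum>q\<in>{0..k}. shuffle_ext (nat (k - q)) (nat q) (sp k v q) (\<lambda>v ys. \<alpha>' q v ys - \<alpha> q v ys) xs)"
      by (rule sp_sum2[OF k, symmetric]) (rule G0)
    also have "\<dots> = ext0 \<alpha>' k (sp k v) xs - ext0 \<alpha> k (sp k v) xs" by (rule ext0_diff[symmetric])
    also have "\<dots> = ce_diff br br (ext1 h k (sp k v)) xs + ext1 h (k + 1) (dtot br actV dV k (sp k v)) xs"
      by (rule H[OF f])
    also have "\<dots> = (\<Sum>q\<in>{0..k}. shuffle_ext (nat (k - q)) (nat q) (sp k v q) (Egen h q) xs)"
      by (rule G2[OF h f])
    also have "\<dots> = (if length xs = nat k then Egen h k v xs else 0)"
      by (rule sp_sum2[OF k]) (rule Egen0[OF h])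
    finally have e: "(if length xs = nat k then \<alpha>' k v xs - \<alpha> k v xs else 0) = (if length xs = nat k then Egen h k v xs else 0)" .
    show "Egen h k v xs = \<alpha>' k v xs - \<alpha> k v xs"
    proof (cases "length xs = nat k")
      case True then show ?thesis using e by simp
    next
      case False
      have "\<alpha>' k v xs = 0" "\<alpha> k v xs = 0"
        using gensp_vanish[OF deg0_gensp[OF \<alpha>'] False] gensp_vanish[OF deg0_gensp[OF \<alpha>] False] by auto
      then show ?thesis using Egen_vanish[OF h k False] by simp
    qed
  qed
  then show "\<exists>h\<in>degm1_gens sg sv Vc. \<forall>k\<ge>0. \<forall>v\<in>Vc k. Egen h k v = (\<lambda>ys. \<alpha>' k v ys - \<alpha> k v ys)"
    using h by blast
next
  assume "\<exists>h\<in>degm1_gens sg sv Vc. \<forall>k\<ge>0. \<forall>v\<in>Vc k. Egen h k v = (\<lambda>ys. \<alpha>' k v ys - \<alpha> k v ys)"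
  then obtain h where h: "h \<in> degm1_gens sg sv Vc"
    and E: "\<And>k v. 0 \<le> k \<Longrightarrow> v \<in> Vc k \<Longrightarrow> Egen h k v = (\<lambda>ys. \<alpha>' k v ys - \<alpha> k v ys)" by blast
  show "LP_homotopic sg br sv Vc actV dV \<alpha> \<alpha>'"
    unfolding LP_homotopic_def
  proof (intro bexI[OF _ h] allI ballI)
    fix n f xs assume f: "f \<in> omega sg sv Vc n"
    have "ext0 \<alpha>' n f xs - ext0 \<alpha> n f xs
       = (\<Sum>q\<in>{0..n}. shuffle_ext (nat (n - q)) (nat q) (f q) (\<lambda>v ys. \<alpha>' q v ys - \<alpha> q v ys) xs)"
      by (rule ext0_diff)
    also have "\<dots> = (\<Sum>q\<in>{0..n}. shuffle_ext (nat (n - q)) (nat q) (f q) (Egen h q) xs)"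
    proof (rule sum.cong[OF refl])
      fix q assume q: "q \<in> {0..n}"
      show "shuffle_ext (nat (n - q)) (nat q) (f q) (\<lambda>v ys. \<alpha>' q v ys - \<alpha> q v ys) xs
          = shuffle_ext (nat (n - q)) (nat q) (f q) (Egen h q) xs"
      proof (rule shuffle_cong)
        fix v ys assume "v \<in> range (f q)"
        then have "v \<in> Vc q" using omega_in[OF f] by auto
        then show "\<alpha>' q v ys - \<alpha> q v ys = Egen h q v ys" using E[of q v] q by simp
      qed simp
    qed
    also have "\<dots> = ce_diff br br (ext1 h n f) xs + ext1 h (n + 1) (dtot br actV dV n f) xs"
      by (rule G2[OF h f, symmetric])
    finally show "ext0 \<alpha>' n f xs - ext0 \<alpha> n f xs = ce_diff br br (ext1 h n f) xs + ext1 h (n + 1) (dtot br actV dV n f) xs" .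
  qed
qed

lemma cob_iff:
  assumes \<alpha>: "\<alpha> \<in> deg0_gens sg sv Vc" and \<alpha>': "\<alpha>' \<in> deg0_gens sg sv Vc"
  shows "(\<lambda>q xs v. cmap \<alpha>' q xs v - cmap \<alpha> q xs v) \<in> coboundaries0 sg br sv Vc actV dV \<longleftrightarrow>
    (\<exists>h\<in>degm1_gens sg sv Vc. \<forall>k\<ge>0. \<forall>v\<in>Vc k. Egen h k v = (\<lambda>ys. \<alpha>' k v ys - \<alpha> k v ys))"
proof -
  have dt: "\<And>h q xs v. h \<in> degm1_gens sg sv Vc \<Longrightarrow>
      dtot br (Hom_act br Vc actV) (Hom_d Vc dV) (-1) (hat h) q xs v
      = (if q \<le> 0 \<and> v \<in> Vc (- q) then Egen h (- q) v xs else 0)"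
  proof -
    fix h q xs v assume h: "h \<in> degm1_gens sg sv Vc"
    have out: "\<And>k v. v \<notin> Vc k \<Longrightarrow> h k v = (\<lambda>_. 0)" using h by (simp add: degm1_gens_def)
    have "dtot br (Hom_act br Vc actV) (Hom_d Vc dV) (-1) (hat h) q xs v
      = (if q \<le> -1 + 1 \<and> v \<in> Vc (- q) then dG br br (actV (- q)) (h (- q)) v xs
         + isgn (-1 + 1) (h (1 - q) (dV (- q) v) xs) else 0)"
      by (rule dtot_hat[OF out])
    then show "dtot br (Hom_act br Vc actV) (Hom_d Vc dV) (-1) (hat h) q xs v
      = (if q \<le> 0 \<and> v \<in> Vc (- q) then Egen h (- q) v xs else 0)"
      by (simp add: Egen_def add.commute)
  qed
  have diff: "\<And>q xs v. cmap \<alpha>' q xs v - cmap \<alpha> q xs v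
      = (if q \<le> 0 \<and> v \<in> Vc (- q) then \<alpha>' (- q) v xs - \<alpha> (- q) v xs else 0)"
  proof -
    fix q xs v
    have o1: "\<And>k v. v \<notin> Vc k \<Longrightarrow> \<alpha> k v = (\<lambda>_. 0)" using \<alpha> by (simp add: deg0_gens_def)
    have o2: "\<And>k v. v \<notin> Vc k \<Longrightarrow> \<alpha>' k v = (\<lambda>_. 0)" using \<alpha>' by (simp add: deg0_gens_def)
    show "cmap \<alpha>' q xs v - cmap \<alpha> q xs v
      = (if q \<le> 0 \<and> v \<in> Vc (- q) then \<alpha>' (- q) v xs - \<alpha> (- q) v xs else 0)"
    proof (cases "q \<le> 0")
      case True
      then show ?thesis using o1[of v "- q"] o2[of v "- q"] by (cases "v \<in> Vc (- q)") (simp_all add: cmap_def)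
    next
      case False then show ?thesis by (simp add: cmap_def)
    qed
  qed
  show ?thesis
  proof
    assume "(\<lambda>q xs v. cmap \<alpha>' q xs v - cmap \<alpha> q xs v) \<in> coboundaries0 sg br sv Vc actV dV"
    then obtain b where b: "b \<in> omega sg (Hom_scale sg) (Hom_c sg sv Vc) (-1)"
      and B: "(\<lambda>q xs v. cmap \<alpha>' q xs v - cmap \<alpha> q xs v) = dtot br (Hom_act br Vc actV) (Hom_d Vc dV) (-1) b"
      unfolding coboundaries0_def by blast
    define h where "h = (\<lambda>k v xs. b (- k) xs v)"
    have hb: "hat h = b" unfolding h_def by (rule hat_un)
    have h: "h \<in> degm1_gens sg sv Vc" using degm1_hat b hb by simp
    have "Egen h k v = (\<lambda>ys. \<alpha>' k v ys - \<alpha> k v ys)" if k: "0 \<le> k" and v: "v \<in> Vc k" for k v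
    proof
      fix ys
      have "cmap \<alpha>' (- k) ys v - cmap \<alpha> (- k) ys v = dtot br (Hom_act br Vc actV) (Hom_d Vc dV) (-1) b (- k) ys v"
        using fun_cong[OF fun_cong[OF fun_cong[OF B, of "- k"], of ys], of v] by simp
      then show "Egen h k v ys = \<alpha>' k v ys - \<alpha> k v ys"
        using dt[OF h, of "- k" ys v] diff[of "- k" ys v] k v hb by simp
    qed
    then show "\<exists>h\<in>degm1_gens sg sv Vc. \<forall>k\<ge>0. \<forall>v\<in>Vc k. Egen h k v = (\<lambda>ys. \<alpha>' k v ys - \<alpha> k v ys)"
      using h by blast
  next
    assume "\<exists>h\<in>degm1_gens sg sv Vc. \<forall>k\<ge>0. \<forall>v\<in>Vc k. Egen h k v = (\<lambda>ys. \<alpha>' k v ys - \<alpha> k v ys)"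
    then obtain h where h: "h \<in> degm1_gens sg sv Vc"
      and E: "\<And>k v. 0 \<le> k \<Longrightarrow> v \<in> Vc k \<Longrightarrow> Egen h k v = (\<lambda>ys. \<alpha>' k v ys - \<alpha> k v ys)" by blast
    have b: "hat h \<in> omega sg (Hom_scale sg) (Hom_c sg sv Vc) (-1)" using degm1_hat h by simp
    have "(\<lambda>q xs v. cmap \<alpha>' q xs v - cmap \<alpha> q xs v) = dtot br (Hom_act br Vc actV) (Hom_d Vc dV) (-1) (hat h)"
    proof (intro ext)
      fix q xs v
      show "cmap \<alpha>' q xs v - cmap \<alpha> q xs v = dtot br (Hom_act br Vc actV) (Hom_d Vc dV) (-1) (hat h) q xs v"
        unfolding dt[OF h] diff using E[of "- q" v] by simp
    qed
    then show "(\<lambda>q xs v. cmap \<alpha>' q xs v - cmap \<alpha> q xs v) \<in> coboundaries0 sg br sv Vc actV dV"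
      unfolding coboundaries0_def using b by blast
  qed
qed

end

theorem proposition1p18:
  fixes sg :: "'k::field_char_0 \<Rightarrow> 'g::ab_group_add \<Rightarrow> 'g"
    and br :: "'g \<Rightarrow> 'g \<Rightarrow> 'g"
    and sv :: "'k \<Rightarrow> 'v::ab_group_add \<Rightarrow> 'v"
    and Vc :: "int \<Rightarrow> 'v set"
    and actV :: "int \<Rightarrow> 'g \<Rightarrow> 'v \<Rightarrow> 'v"
    and dV :: "int \<Rightarrow> 'v \<Rightarrow> 'v"
  assumes "lie_algebra sg br" and "finite_dim sg"
    and "dg_module sg br sv Vc actV dV" and "nonneg Vc"
  shows "bij_betw cmap (LP_structures sg br sv Vc actV dV) (cocycles0 sg br sv Vc actV dV)
    \<and> (\<forall>\<alpha>\<in>LP_structures sg br sv Vc actV dV. \<forall>\<alpha>'\<in>LP_structures sg br sv Vc actV dV.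
         LP_homotopic sg br sv Vc actV dV \<alpha> \<alpha>' \<longleftrightarrow>
         (\<lambda>q xs v. cmap \<alpha>' q xs v - cmap \<alpha> q xs v) \<in> coboundaries0 sg br sv Vc actV dV)"
proof -
  interpret L: LPc sg br sv Vc actV dV
    by unfold_locales (use assms in auto)
  have inj: "inj_on cmap (LP_structures sg br sv Vc actV dV)"
  proof (rule inj_onI)
    fix \<alpha> \<beta> assume a: "\<alpha> \<in> LP_structures sg br sv Vc actV dV" and b: "\<beta> \<in> LP_structures sg br sv Vc actV dV"
      and e: "cmap \<alpha> = cmap \<beta>"
    have "L.hat \<alpha> = L.hat \<beta>" using e L.cmap_hat a b by (simp add: L.LP_iff)
    then show "\<alpha> = \<beta>" using L.un_hat[of \<alpha>] L.un_hat[of \<beta>] by metis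
  qed
  have img: "cmap ` LP_structures sg br sv Vc actV dV = cocycles0 sg br sv Vc actV dV"
  proof
    show "cmap ` LP_structures sg br sv Vc actV dV \<subseteq> cocycles0 sg br sv Vc actV dV"
      using L.LP_iff L.cocycle_iff by blast
  next
    show "cocycles0 sg br sv Vc actV dV \<subseteq> cmap ` LP_structures sg br sv Vc actV dV"
    proof
      fix c assume c: "c \<in> cocycles0 sg br sv Vc actV dV"
      define \<alpha> where "\<alpha> = (\<lambda>k v xs. c (- k) xs v)"
      have ha: "L.hat \<alpha> = c" unfolding \<alpha>_def by (rule L.hat_un)
      have a: "\<alpha> \<in> deg0_gens sg sv Vc" using L.deg0_hat c ha by (simp add: cocycles0_def)
      have ca: "cmap \<alpha> = c" using L.cmap_hat[OF a] ha by simp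
      have "\<alpha> \<in> LP_structures sg br sv Vc actV dV"
        using L.cocycle_iff[OF a] c ca L.LP_iff a by simp
      then show "c \<in> cmap ` LP_structures sg br sv Vc actV dV" using ca by blast
    qed
  qed
  have hom: "\<forall>\<alpha>\<in>LP_structures sg br sv Vc actV dV. \<forall>\<alpha>'\<in>LP_structures sg br sv Vc actV dV.
         LP_homotopic sg br sv Vc actV dV \<alpha> \<alpha>' \<longleftrightarrow>
         (\<lambda>q xs v. cmap \<alpha>' q xs v - cmap \<alpha> q xs v) \<in> coboundaries0 sg br sv Vc actV dV"
  proof (intro ballI)
    fix \<alpha> \<alpha>' assume a: "\<alpha> \<in> LP_structures sg br sv Vc actV dV" and a': "\<alpha>' \<in> LP_structures sg br sv Vc actV dV"
    then have a0: "\<alpha> \<in> deg0_gens sg sv Vc" and a0': "\<alpha>' \<in> deg0_gens sg sv Vc" by (auto simp: L.LP_iff)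
    show "LP_homotopic sg br sv Vc actV dV \<alpha> \<alpha>' \<longleftrightarrow>
         (\<lambda>q xs v. cmap \<alpha>' q xs v - cmap \<alpha> q xs v) \<in> coboundaries0 sg br sv Vc actV dV"
      unfolding L.homot_iff[OF a0 a0'] L.cob_iff[OF a0 a0'] ..
  qed
  show ?thesis using inj img hom by (simp add: bij_betw_def)
qed


end
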